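(* Let $a>0$, $\theta\ge 0$, $L>0$ and $\lambda\in(\tfrac12,1)$ be given. Assume that the feedback parameter $k$ satisfies $$k\ge \max\Big\{1,\ \tfrac43\Big(\tfrac1a+\tfrac1{a^2}\Big),\ \tfrac{1}{\lambda a}\Big\}.$$ Define $$\mu=\frac{1}{4\,\mathrm{e}\,L\,k},\qquad C_0=12k+4(k+1)\Big(18+13\theta+\tfrac{1}{a^2}(8+6\theta)\Big)+10,$$ $$M_1=\min\Big\{\tfrac34 k a^2-a-1,\ k-1\Big\},\qquad K_1=\frac{1+2L^2}{M_1}.$$ Let $\bar u\in C^1([0,L])$ with $\bar u(x)>0$ be a stationary state, i.e. a solution of $\bar u_x=\frac{\theta}{2}\,\frac{|\bar u|\,\bar u^2}{a^2-\bar u^2}$, and assume that for all $x\in[0,L]$ $$\bar u(x)\le \min\Big\{1,\ \tfrac{1}{4k\mathrm{e}},\ (1-\lambda)\tfrac a2,\ \tfrac{\mu}{C_0K_1}\Big\},\qquad \bar u_x(x)\le \min\Big\{1,\ \tfrac{\mu}{C_0K_1}\Big\}.$$ Let $T_{period}>0$ and $T>T_{period}$ be given, and let $\omega$ be fixed with $b(\cdot,\omega)\in C^2([0,T])$. Let $u\in C^2([0,T]\times[0,L])$ be a solution of the system $$\begin{cases} u(0,x)=\varphi(x),\quad u_t(0,x)=\psi(x), & x\in[0,L],\\ u_{tt}+2(\bar u+u)u_{tx}-\big(a^2-(\bar u+u)^2\big)u_{xx}=F(x,u,u_x,u_t) & \text{on }[0,T]\times[0,L],\\ u_x(t,0)=k\,u_t(t,0),\quad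 u(t,L)=b(t,\omega), & t\in[0,T],\end{cases}$$ (with $C^2$ initial data $\varphi\in C^2([0,L])$, $\psi\in C^1([0,L])$ compatible with the boundary conditions), where $$F=\tilde F(u+\bar u,\,u_x+\bar u_x,\,u_t)-\frac{a^2-(\bar u+u)^2}{a^2-\bar u^2}\,\tilde F(\bar u,\bar u_x,0),$$ $$\tilde F(v,v_x,v_t)=-2v_tv_x-2v\,v_x^2-\tfrac32\theta\, v|v|\,v_x-\theta|v|\,v_t,$$ and assume this solution satisfies on $[0,T]\times[0,L]$ $$|u|\le\min\Big\{\bar u(0),\ (1-\lambda)\tfrac a2,\ \tfrac{1}{4k\mathrm{e}}\Big\},\qquad \max\{|u|,|u_x|,|u_t|\}\le\min\Big\{1,\ \tfrac{\mu}{C_0K_1}\Big\}.$$ Assume that there exist $\nu>\mu$ and $C_\nu>0$ such that for all $t\in(T_{period},T)$ $$\int_{t-T_{period}}^t |b(\tau,\omega)|^2+|b_t(\tau,\omega)|^2\,d\tau\le C_\nu\exp(-\nu t),$$ and set $\delta=\nu-\mu>0$ and $C_g=\Big(\tfrac43\mathrm{e}\,a^2k^2+\tfrac{1}{2\mathrm{e}K_1k}\Big)C_\nu$. Define $$E_1(t)=\int_0^L k\Big[\big(a^2-(\bar u+u)^2\big)u_x^2+u_t^2\Big]-2\exp\Big(-\tfrac xL\Big)\Big[(\bar u+u)u_x^2+u_tu_x\Big]dx,\qquad E(t)=\int_{t-T_{period}}^tE_1(\tau)\,d\tau .$$ Then for all $t\in(T_{period},T)$ $$E(t)\le \exp\big(-\mu(t-T_{period})\big)\Big[E(T_{period})+\frac{C_g}{\delta}\Big].$$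 Moreover, if $b(t,\omega)=0$ for all $t\ge T-T_{period}$, then $$\|u\|^2_{H^1((T-T_{period},T)\times(0,L))}\le K_1\exp\big(-\mu(T-T_{period})\big)\Big[E(T_{period})+\frac{C_g}{\delta}\Big].$$
   Context: The system models subsonic isothermal gas flow in a pipe of length $L$: $u=\tilde u-\bar u$ is the deviation of the gas velocity $\tilde u$ from a stationary velocity profile $\bar u$, $a>0$ is the speed of sound, $\theta\ge0$ a friction coefficient, $k>0$ the feedback parameter of the Neumann feedback at $x=0$, and $b(t,\omega)$ models uncertain customer behavior at $x=L$ depending on an uncertain parameter $\omega$. $\mathrm{e}$ denotes Euler's number. *)

theory Defs
  imports "HOL-Analysis.Analysis"
begin

definition mu_c :: "real \<Rightarrow> real \<Rightarrow> real" where
  "mu_c L k = 1 / (4 * exp 1 * L * k)"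

definition C0_c :: "real \<Rightarrow> real \<Rightarrow> real \<Rightarrow> real" where
  "C0_c a \<theta> k = 12 * k + 4 * (k + 1) * (18 + 13 * \<theta> + (1 / a\<^sup>2) * (8 + 6 * \<theta>)) + 10"

definition M1_c :: "real \<Rightarrow> real \<Rightarrow> real" where
  "M1_c a k = min (3/4 * k * a\<^sup>2 - a - 1) (k - 1)"

definition K1_c :: "real \<Rightarrow> real \<Rightarrow> real \<Rightarrow> real" where
  "K1_c a L k = (1 + 2 * L\<^sup>2) / M1_c a k"

definition Ftil :: "real \<Rightarrow> real \<Rightarrow> real \<Rightarrow> real \<Rightarrow> real" where
  "Ftil \<theta> v vx vt = - 2 * vt * vx - 2 * v * vx\<^sup>2 - 3/2 * \<theta> * v * \<bar>v\<bar> * vx - \<theta> * \<bar>v\<bar> * vt"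

definition Fsrc :: "real \<Rightarrow> real \<Rightarrow> real \<Rightarrow> real \<Rightarrow> real \<Rightarrow> real \<Rightarrow> real \<Rightarrow> real" where
  "Fsrc a \<theta> ub ubx w wx wt =
     Ftil \<theta> (w + ub) (wx + ubx) wt
     - (a\<^sup>2 - (ub + w)\<^sup>2) / (a\<^sup>2 - ub\<^sup>2) * Ftil \<theta> ub ubx 0"

definition E1 :: "real \<Rightarrow> real \<Rightarrow> real \<Rightarrow> (real \<Rightarrow> real) \<Rightarrow> (real \<Rightarrow> real \<Rightarrow> real)
    \<Rightarrow> (real \<Rightarrow> real \<Rightarrow> real) \<Rightarrow> (real \<Rightarrow> real \<Rightarrow> real) \<Rightarrow> real \<Rightarrow> real" where
  "E1 a L k ub u ux ut t =
     integral {0..L} (\<lambda>x. k * ((a\<^sup>2 - (ub x + u t x)\<^sup>2) * (ux t x)\<^sup>2 + (ut t x)\<^sup>2)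
        - 2 * exp (- x / L) * ((ub x + u t x) * (ux t x)\<^sup>2 + ut t x * ux t x))"

definition Een :: "real \<Rightarrow> real \<Rightarrow> real \<Rightarrow> real \<Rightarrow> (real \<Rightarrow> real) \<Rightarrow> (real \<Rightarrow> real \<Rightarrow> real)
    \<Rightarrow> (real \<Rightarrow> real \<Rightarrow> real) \<Rightarrow> (real \<Rightarrow> real \<Rightarrow> real) \<Rightarrow> real \<Rightarrow> real" where
  "Een a L k Tp ub u ux ut t = integral {t - Tp..t} (\<lambda>\<tau>. E1 a L k ub u ux ut \<tau>)"

text \<open>Squared \<open>H^1\<close> norm on \<open>(t0,t1) \<times> (0,L)\<close> of a function with partial derivatives ux, ut.\<close>
definition H1sq :: "real \<Rightarrow> real \<Rightarrow> real \<Rightarrow> (real \<Rightarrow> real \<Rightarrow> real) \<Rightarrow> (real \<Rightarrow> real \<Rightarrow> real)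
    \<Rightarrow> (real \<Rightarrow> real \<Rightarrow> real) \<Rightarrow> real" where
  "H1sq t0 t1 L u ux ut =
     integral ({t0..t1} \<times> {0..L}) (\<lambda>(t, x). (u t x)\<^sup>2 + (ux t x)\<^sup>2 + (ut t x)\<^sup>2)"

end

theory Submission
  imports Defs "HOL-Analysis.Analysis"
begin


lemma Fsrc_expand:
  fixes a th c d U0 X Y :: real
  assumes "U0 + c \<ge> 0" "c > 0" "a^2 - c^2 \<noteq> 0"
  shows "Fsrc a th c d U0 X Y = -2 * Y * (X+d) - th * (U0+c) * Y
     - 2 * (U0 * d^2 + (U0+c) * (2 * d * X + X^2))
     - 3/2 * th * ((2 * c * U0 + U0^2) * d + (U0+c)^2 * X)
     + (2 * c * U0 + U0^2) / (a^2 - c^2) * (-2 * c * d^2 - 3/2 * th * c^2 * d)"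
proof -
  have r: "(a^2 - (c+U0)^2) / (a^2 - c^2) = 1 - (2 * c * U0 + U0^2) / (a^2 - c^2)"
    using assms by (simp add: field_simps power2_eq_square)
  have ab: "\<bar>U0 + c\<bar> = U0 + c" "\<bar>c\<bar> = c" using assms by auto
  show ?thesis
    unfolding Fsrc_def Ftil_def r ab
    by (simp add: algebra_simps power2_eq_square)
qed

lemma sq_le_abs: "\<bar>x::real\<bar> \<le> s \<Longrightarrow> \<bar>x\<bar> \<le> 1 \<Longrightarrow> x^2 \<le> s * \<bar>x\<bar>"
proof -
  assume a: "\<bar>x\<bar> \<le> s" "\<bar>x\<bar> \<le> 1"
  have "x^2 = \<bar>x\<bar> * \<bar>x\<bar>" by (metis abs_mult_self_eq power2_eq_square)
  also have "\<dots> \<le> s * \<bar>x\<bar>" by (rule mult_right_mono) (use a in auto)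
  finally show ?thesis .
qed

lemma abs5: "\<bar>(p::real) - q - r - t + z\<bar> \<le> \<bar>p\<bar> + \<bar>q\<bar> + \<bar>r\<bar> + \<bar>t\<bar> + \<bar>z\<bar>"
  by arith

lemma F_bound:
  fixes a th c d U0 X Y s :: real
  assumes th: "th \<ge> 0" and a: "a > 0" and c: "c > 0" "c \<le> 1" "c \<le> s" "c \<le> a/4"
    and d: "0 \<le> d" "d \<le> 1" "d \<le> s"
    and U: "\<bar>U0\<bar> \<le> c" "\<bar>U0\<bar> \<le> 1" "\<bar>U0\<bar> \<le> s"
    and X: "\<bar>X\<bar> \<le> 1" "\<bar>X\<bar> \<le> s" and Y: "\<bar>Y\<bar> \<le> 1" "\<bar>Y\<bar> \<le> s"
  shows "\<bar>Fsrc a th c d U0 X Y\<bar> \<le> s * ((4 + 2 * th) * \<bar>Y\<bar> + (2 + 9/2 * th + (8 + 6 * th)/a^2) * \<bar>U0\<bar> + (12 + 6 * th) * \<bar>X\<bar>)"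
proof -
  define vv where "vv = U0 + c"
  have v0: "vv \<ge> 0" "vv \<le> 2" "vv \<le> 2 * s" using U c unfolding vv_def by auto
  have s0: "s \<ge> 0" using c by auto
  have dd: "d^2 \<le> s"
  proof -
    have "d^2 \<le> s * \<bar>d\<bar>" using sq_le_abs[of d s] d by auto
    moreover have "s * \<bar>d\<bar> \<le> s * 1" using d s0 by (intro mult_left_mono) auto
    ultimately show ?thesis by simp
  qed
  have c2: "c^2 \<le> a^2/16"
  proof -
    have "c * c \<le> (a/4) * (a/4)" using c by (intro mult_mono) auto
    thus ?thesis by (simp add: power2_eq_square)
  qed
  have a2: "a^2 > 0" using a by simp
  have ac: "a^2 - c^2 \<ge> 3/4 * a^2" using c2 a2 by linarith
  have ac0: "a^2 - c^2 > 0" using ac a2 by linarith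
  have E: "Fsrc a th c d U0 X Y = -2 * Y * (X+d) - th * vv * Y
     - 2 * (U0 * d^2 + vv * (2 * d * X + X^2))
     - 3/2 * th * ((2 * c * U0 + U0^2) * d + vv^2 * X)
     + (2 * c * U0 + U0^2) / (a^2 - c^2) * (-2 * c * d^2 - 3/2 * th * c^2 * d)"
    unfolding vv_def using Fsrc_expand[of U0 c a th d X Y] v0 c ac0 vv_def by simp
  have T1: "\<bar>-2 * Y * (X+d)\<bar> \<le> 4 * s * \<bar>Y\<bar>"
  proof -
    have "\<bar>X + d\<bar> \<le> 2 * s" using X d by auto
    hence h: "\<bar>Y\<bar> * \<bar>X+d\<bar> \<le> \<bar>Y\<bar> * (2 * s)" by (simp add: mult_left_mono)
    have e: "\<bar>-2 * Y * (X+d)\<bar> = 2 * (\<bar>Y\<bar> * \<bar>X+d\<bar>)" by (simp add: abs_mult)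
    have e2: "\<bar>Y\<bar> * (2 * s) = 2 * s * \<bar>Y\<bar>" by simp
    show ?thesis using h unfolding e e2 by linarith
  qed
  have T2: "\<bar>th * vv * Y\<bar> \<le> 2 * th * s * \<bar>Y\<bar>"
  proof -
    have "th * vv \<le> th * (2 * s)" using v0 th by (simp add: mult_left_mono)
    hence "th * vv * \<bar>Y\<bar> \<le> th * (2 * s) * \<bar>Y\<bar>" by (simp add: mult_right_mono)
    thus ?thesis using v0 th by (simp add: abs_mult)
  qed
  have T3: "\<bar>2 * (U0 * d^2 + vv * (2 * d * X + X^2))\<bar> \<le> 2 * s * \<bar>U0\<bar> + 12 * s * \<bar>X\<bar>"
  proof -
    have a1: "\<bar>U0 * d^2\<bar> \<le> s * \<bar>U0\<bar>"
    proof -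
      have "\<bar>U0\<bar> * d^2 \<le> \<bar>U0\<bar> * s" using dd by (simp add: mult_left_mono)
      thus ?thesis by (simp add: abs_mult mult.commute)
    qed
    have a2: "\<bar>2 * d * X + X^2\<bar> \<le> 3 * s * \<bar>X\<bar>"
    proof -
      have "\<bar>2 * d * X\<bar> \<le> 2 * s * \<bar>X\<bar>" using d by (simp add: abs_mult mult_right_mono)
      moreover have "X^2 \<le> s * \<bar>X\<bar>" using X sq_le_abs by blast
      moreover have "\<bar>2 * d * X + X^2\<bar> \<le> \<bar>2 * d * X\<bar> + X^2"
        using abs_triangle_ineq[of "2 * d * X" "X^2"] by simp
      ultimately show ?thesis by linarith
    qed
    have a3: "\<bar>vv * (2 * d * X + X^2)\<bar> \<le> 2 * (3 * s * \<bar>X\<bar>)"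
    proof -
      have "vv * \<bar>2 * d * X + X^2\<bar> \<le> 2 * (3 * s * \<bar>X\<bar>)"
        using a2 v0 by (intro mult_mono) auto
      thus ?thesis using v0 by (simp add: abs_mult)
    qed
    have "\<bar>2 * (U0 * d^2 + vv * (2 * d * X + X^2))\<bar> = 2 * \<bar>U0 * d^2 + vv * (2 * d * X + X^2)\<bar>"
      by (subst abs_mult) simp
    moreover have "\<bar>U0 * d^2 + vv * (2 * d * X + X^2)\<bar> \<le> \<bar>U0 * d^2\<bar> + \<bar>vv * (2 * d * X + X^2)\<bar>"
      by (rule abs_triangle_ineq)
    ultimately show ?thesis using a1 a3 by linarith
  qed
  have b1: "\<bar>2 * c * U0 + U0^2\<bar> \<le> 3 * \<bar>U0\<bar>"
  proof -
    have "\<bar>2 * c * U0\<bar> \<le> 2 * \<bar>U0\<bar>" using c by (simp add: abs_mult mult_right_mono)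
    moreover have "U0^2 \<le> 1 * \<bar>U0\<bar>" using U sq_le_abs by blast
    moreover have "\<bar>2 * c * U0 + U0^2\<bar> \<le> \<bar>2 * c * U0\<bar> + U0^2"
      using abs_triangle_ineq[of "2 * c * U0" "U0^2"] by simp
    ultimately show ?thesis by linarith
  qed
  have T4: "\<bar>3/2 * th * ((2 * c * U0 + U0^2) * d + vv^2 * X)\<bar> \<le> 9/2 * th * s * \<bar>U0\<bar> + 6 * th * s * \<bar>X\<bar>"
  proof -
    have b2: "\<bar>(2 * c * U0 + U0^2) * d\<bar> \<le> 3 * \<bar>U0\<bar> * s"
      using b1 d by (simp add: abs_mult mult_mono)
    have b3: "\<bar>vv^2 * X\<bar> \<le> 4 * s * \<bar>X\<bar>"
    proof -
      have "vv * vv \<le> 2 * (2 * s)" using v0 by (intro mult_mono) auto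
      hence "vv^2 \<le> 4 * s" by (simp add: power2_eq_square)
      thus ?thesis by (simp add: abs_mult mult_right_mono)
    qed
    have "\<bar>(2 * c * U0 + U0^2) * d + vv^2 * X\<bar> \<le> 3 * s * \<bar>U0\<bar> + 4 * s * \<bar>X\<bar>"
      using b2 b3 abs_triangle_ineq[of "(2 * c * U0 + U0^2) * d" "vv^2 * X"]
        mult.commute[of "\<bar>U0\<bar>" s] by (simp add: mult.assoc)
    hence "3/2 * th * \<bar>(2 * c * U0 + U0^2) * d + vv^2 * X\<bar> \<le> 3/2 * th * (3 * s * \<bar>U0\<bar> + 4 * s * \<bar>X\<bar>)"
      using th by (simp add: mult_left_mono)
    moreover have "\<bar>3/2 * th * ((2 * c * U0 + U0^2) * d + vv^2 * X)\<bar> = 3/2 * th * \<bar>(2 * c * U0 + U0^2) * d + vv^2 * X\<bar>"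
      using th by (simp add: abs_mult)
    moreover have "3/2 * th * (3 * s * \<bar>U0\<bar> + 4 * s * \<bar>X\<bar>) = 9/2 * th * s * \<bar>U0\<bar> + 6 * th * s * \<bar>X\<bar>"
      by (simp add: algebra_simps)
    ultimately show ?thesis by linarith
  qed
  have T5: "\<bar>(2 * c * U0 + U0^2) / (a^2 - c^2) * (-2 * c * d^2 - 3/2 * th * c^2 * d)\<bar> \<le> (8 + 6 * th)/a^2 * s * \<bar>U0\<bar>"
  proof -
    have g: "\<bar>-2 * c * d^2 - 3/2 * th * c^2 * d\<bar> \<le> (2 + 3/2 * th) * s"
    proof -
      have g1: "c * d^2 \<le> s"
      proof -
        have "c * d^2 \<le> 1 * s" using c d dd by (intro mult_mono) auto
        thus ?thesis by simp
      qed
      have g2: "c^2 * d \<le> s"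
      proof -
        have "c^2 \<le> 1 * 1" using c by (simp add: power_le_one)
        hence "c^2 * d \<le> 1 * s" using d by (intro mult_mono) auto
        thus ?thesis by simp
      qed
      have g3: "c * d^2 \<ge> 0" "c^2 * d \<ge> 0" using c d by auto
      have g4: "th * (c^2 * d) \<le> th * s" using g2 th by (simp add: mult_left_mono)
      have g5: "th * (c^2 * d) \<ge> 0" using g3 th by simp
      have e: "-2 * c * d^2 - 3/2 * th * c^2 * d = -(2 * (c * d^2) + 3/2 * (th * (c^2 * d)))"
        by (simp add: algebra_simps)
      have e2: "(2 + 3/2 * th) * s = 2 * s + 3/2 * (th * s)" by (simp add: algebra_simps)
      show ?thesis unfolding e e2 using g1 g3 g4 g5 by simp
    qed
    have q: "\<bar>2 * c * U0 + U0^2\<bar> / (a^2 - c^2) \<le> 3 * \<bar>U0\<bar> / (3/4 * a^2)"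
      using b1 ac a2 by (intro frac_le) auto
    have "\<bar>(2 * c * U0 + U0^2) / (a^2 - c^2)\<bar> * \<bar>-2 * c * d^2 - 3/2 * th * c^2 * d\<bar>
          \<le> 3 * \<bar>U0\<bar> / (3/4 * a^2) * ((2 + 3/2 * th) * s)"
    proof -
      have "\<bar>(2 * c * U0 + U0^2) / (a^2 - c^2)\<bar> = \<bar>2 * c * U0 + U0^2\<bar> / (a^2 - c^2)"
        using ac0 by simp
      thus ?thesis using q g a2 by (intro mult_mono) auto
    qed
    also have "\<dots> = (8 + 6 * th)/a^2 * s * \<bar>U0\<bar>" using a by (simp add: field_simps)
    finally show ?thesis by (simp add: abs_mult)
  qed
  have "\<bar>Fsrc a th c d U0 X Y\<bar> \<le> 4 * s * \<bar>Y\<bar> + 2 * th * s * \<bar>Y\<bar> + (2 * s * \<bar>U0\<bar> + 12 * s * \<bar>X\<bar>)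
     + (9/2 * th * s * \<bar>U0\<bar> + 6 * th * s * \<bar>X\<bar>) + (8 + 6 * th)/a^2 * s * \<bar>U0\<bar>"
    unfolding E using T1 T2 T3 T4 T5 abs5[of "-2 * Y * (X+d)" "th * vv * Y" "2 * (U0 * d^2 + vv * (2 * d * X + X^2))"
      "3/2 * th * ((2 * c * U0 + U0^2) * d + vv^2 * X)" "(2 * c * U0 + U0^2) / (a^2 - c^2) * (-2 * c * d^2 - 3/2 * th * c^2 * d)"]
    by linarith
  thus ?thesis by (simp add: algebra_simps)
qed
lemma prod_le_Q: "(p::real)^2 \<le> Q \<Longrightarrow> q^2 \<le> Q \<Longrightarrow> \<bar>p\<bar> * \<bar>q\<bar> \<le> Q"
proof -
  assume a: "p^2 \<le> Q" "q^2 \<le> Q"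
  have "0 \<le> (\<bar>p\<bar> - \<bar>q\<bar>)^2" by simp
  hence "2 * (\<bar>p\<bar> * \<bar>q\<bar>) \<le> p^2 + q^2" by (simp add: power2_eq_square algebra_simps)
  thus ?thesis using a by linarith
qed

lemma mono3: "0 \<le> (x::real) \<Longrightarrow> x \<le> x' \<Longrightarrow> 0 \<le> y \<Longrightarrow> y \<le> y' \<Longrightarrow> 0 \<le> z \<Longrightarrow> z \<le> z'
  \<Longrightarrow> x * y * z \<le> x' * y' * z'"
  by (meson mult_mono order_trans mult_nonneg_nonneg)

lemma R_bound:
  fixes a th c d U0 X Y s k w :: real
  assumes th: "th \<ge> 0" and a: "a > 0" and c: "c > 0" "c \<le> 1" "c \<le> s" "c \<le> a/4"
    and d: "0 \<le> d" "d \<le> 1" "d \<le> s"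
    and U: "\<bar>U0\<bar> \<le> c" "\<bar>U0\<bar> \<le> 1" "\<bar>U0\<bar> \<le> s"
    and X: "\<bar>X\<bar> \<le> 1" "\<bar>X\<bar> \<le> s" and Y: "\<bar>Y\<bar> \<le> 1" "\<bar>Y\<bar> \<le> s"
    and k: "k \<ge> 1" and w: "0 \<le> w" "w \<le> 1"
  shows "2 * (k * Y - w * X) * Fsrc a th c d U0 X Y - 2 * k * (c + U0) * Y * X^2
      + 4 * k * (c + U0) * (d + X) * Y * X + 2 * k * (d + X) * Y^2 - 2 * w * Y * X^2
      - 2 * w * (c + U0) * (d + X) * X^2 \<le> C0_c a th k * s * (U0^2 + X^2 + Y^2)"
proof -
  define Q where "Q = U0^2 + X^2 + Y^2"
  define vv where "vv = c + U0"
  define al where "al = 4 + 2 * th"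
  define be where "be = 2 + 9/2 * th + (8 + 6 * th)/a^2"
  define ga where "ga = 12 + 6 * th"
  define c0 where "c0 = 18 + 13 * th + (8 + 6 * th)/a^2"
  define S where "S = al * \<bar>Y\<bar> + be * \<bar>U0\<bar> + ga * \<bar>X\<bar>"
  have v0: "vv \<ge> 0" "vv \<le> 2" using U c unfolding vv_def by auto
  have s0: "s \<ge> 0" using c by auto
  have pos: "al \<ge> 0" "be \<ge> 0" "ga \<ge> 0" using th unfolding al_def be_def ga_def by auto
  have sum: "al + be + ga \<le> c0" unfolding al_def be_def ga_def c0_def using th by simp
  have Qs: "U0^2 \<le> Q" "X^2 \<le> Q" "Y^2 \<le> Q" unfolding Q_def by auto
  have Q0: "Q \<ge> 0" unfolding Q_def by simp
  have Fb: "\<bar>Fsrc a th c d U0 X Y\<bar> \<le> s * S"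
    using F_bound[OF th a c d U X Y] unfolding S_def al_def be_def ga_def by simp
  have pS: "\<bar>p\<bar> * S \<le> c0 * Q" if "p^2 \<le> Q" for p
  proof -
    have "\<bar>p\<bar> * S = al * (\<bar>p\<bar> * \<bar>Y\<bar>) + be * (\<bar>p\<bar> * \<bar>U0\<bar>) + ga * (\<bar>p\<bar> * \<bar>X\<bar>)"
      unfolding S_def by (simp add: algebra_simps)
    also have "\<dots> \<le> al * Q + be * Q + ga * Q"
      using prod_le_Q[OF that] Qs pos by (intro add_mono mult_left_mono) auto
    also have "\<dots> = (al + be + ga) * Q" by (simp add: algebra_simps)
    also have "\<dots> \<le> c0 * Q" using sum Q0 by (simp add: mult_right_mono)
    finally show ?thesis .
  qed
  have t1: "\<bar>2 * (k * Y - w * X) * Fsrc a th c d U0 X Y\<bar> \<le> 2 * (k + 1) * c0 * s * Q"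
  proof -
    have "\<bar>k * Y - w * X\<bar> \<le> k * \<bar>Y\<bar> + \<bar>X\<bar>"
    proof -
      have "\<bar>w * X\<bar> \<le> \<bar>X\<bar>" using w by (simp add: abs_mult mult_left_le_one_le)
      moreover have "\<bar>k * Y\<bar> = k * \<bar>Y\<bar>" using k by (simp add: abs_mult)
      ultimately show ?thesis by linarith
    qed
    hence "\<bar>k * Y - w * X\<bar> * \<bar>Fsrc a th c d U0 X Y\<bar> \<le> (k * \<bar>Y\<bar> + \<bar>X\<bar>) * (s * S)"
      using Fb by (intro mult_mono) auto
    also have "\<dots> = s * (k * (\<bar>Y\<bar> * S) + \<bar>X\<bar> * S)" by (simp add: algebra_simps)
    also have "\<dots> \<le> s * (k * (c0 * Q) + c0 * Q)"
      using pS[OF Qs(3)] pS[OF Qs(2)] k s0 by (intro mult_left_mono add_mono) auto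
    finally have "\<bar>k * Y - w * X\<bar> * \<bar>Fsrc a th c d U0 X Y\<bar> \<le> s * (k * (c0 * Q) + c0 * Q)" .
    moreover have "\<bar>2 * (k * Y - w * X) * Fsrc a th c d U0 X Y\<bar> = 2 * (\<bar>k * Y - w * X\<bar> * \<bar>Fsrc a th c d U0 X Y\<bar>)"
      by (simp only: abs_mult mult.assoc)
    moreover have "s * (k * (c0 * Q) + c0 * Q) = (k + 1) * c0 * s * Q" by (simp add: algebra_simps)
    ultimately show ?thesis by linarith
  qed
  have t2: "\<bar>2 * k * vv * Y * X^2\<bar> \<le> 4 * k * s * Q"
  proof -
    have "vv * \<bar>Y\<bar> * X^2 \<le> 2 * s * Q" using v0 Y Qs by (intro mono3) auto
    hence "k * (vv * \<bar>Y\<bar> * X^2) \<le> k * (2 * s * Q)" using k by (intro mult_left_mono) auto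
    thus ?thesis using v0 k by (simp add: abs_mult algebra_simps)
  qed
  have t3: "\<bar>4 * k * vv * (d + X) * Y * X\<bar> \<le> 16 * k * s * Q"
  proof -
    have dx: "\<bar>d + X\<bar> \<le> 2 * s" using d X by auto
    have "vv * \<bar>d + X\<bar> * (\<bar>Y\<bar> * \<bar>X\<bar>) \<le> 2 * (2 * s) * Q"
      using v0 dx prod_le_Q[OF Qs(3) Qs(2)] by (intro mono3) auto
    hence "k * (vv * \<bar>d + X\<bar> * (\<bar>Y\<bar> * \<bar>X\<bar>)) \<le> k * (2 * (2 * s) * Q)" using k by (intro mult_left_mono) auto
    moreover have "\<bar>4 * k * vv * (d + X) * Y * X\<bar> = 4 * (k * (vv * \<bar>d + X\<bar> * (\<bar>Y\<bar> * \<bar>X\<bar>)))"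
    proof -
      have "\<bar>4 * k * vv * z * Y * X\<bar> = 4 * (k * (vv * \<bar>z\<bar> * (\<bar>Y\<bar> * \<bar>X\<bar>)))" for z
        using v0 k by (simp add: abs_mult abs_of_nonneg mult_ac)
      thus ?thesis by blast
    qed
    moreover have "4 * (k * (2 * (2 * s) * Q)) = 16 * k * s * Q" by simp
    ultimately show ?thesis by linarith
  qed
  have t4: "\<bar>2 * k * (d + X) * Y^2\<bar> \<le> 4 * k * s * Q"
  proof -
    have dx: "\<bar>d + X\<bar> \<le> 2 * s" using d X by auto
    have "\<bar>d + X\<bar> * Y^2 \<le> (2 * s) * Q" using dx Qs by (intro mult_mono) auto
    hence "k * (\<bar>d + X\<bar> * Y^2) \<le> k * ((2 * s) * Q)" using k by (intro mult_left_mono) auto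
    moreover have "\<bar>2 * k * z * Y^2\<bar> = 2 * (k * (\<bar>z\<bar> * Y^2))" for z
      using k by (simp add: abs_mult abs_of_nonneg mult_ac)
    moreover have "2 * (k * ((2 * s) * Q)) = 4 * k * s * Q" by simp
    ultimately show ?thesis by (metis (no_types, lifting) mult_left_mono zero_le_numeral)
  qed
  have t5: "\<bar>2 * w * Y * X^2\<bar> \<le> 2 * s * Q"
  proof -
    have "w * \<bar>Y\<bar> * X^2 \<le> 1 * s * Q" using w Y Qs by (intro mono3) auto
    thus ?thesis using w by (simp add: abs_mult algebra_simps)
  qed
  have t6: "\<bar>2 * w * vv * (d + X) * X^2\<bar> \<le> 8 * s * Q"
  proof -
    have dx: "\<bar>d + X\<bar> \<le> 2 * s" using d X by auto
    have "(w * vv) * \<bar>d + X\<bar> * X^2 \<le> (1 * 2) * (2 * s) * Q"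
      using w v0 dx Qs by (intro mono3 mult_mono) auto
    moreover have "\<bar>2 * w * vv * z * X^2\<bar> = 2 * ((w * vv) * \<bar>z\<bar> * X^2)" for z
      using w v0 by (simp add: abs_mult abs_of_nonneg mult_ac)
    moreover have "2 * (1 * 2 * (2 * s) * Q) = 8 * s * Q" by simp
    ultimately show ?thesis by (metis (no_types, lifting) mult_left_mono zero_le_numeral)
  qed
  have tot: "2 * (k * Y - w * X) * Fsrc a th c d U0 X Y - 2 * k * vv * Y * X^2
      + 4 * k * vv * (d + X) * Y * X + 2 * k * (d + X) * Y^2 - 2 * w * Y * X^2
      - 2 * w * vv * (d + X) * X^2 \<le> 2 * (k + 1) * c0 * s * Q + 4 * k * s * Q + 16 * k * s * Q
        + 4 * k * s * Q + 2 * s * Q + 8 * s * Q"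
    using t1 t2 t3 t4 t5 t6 by linarith
  have cc: "2 * (k + 1) * c0 + 24 * k + 10 \<le> C0_c a th k"
  proof -
    have "c0 \<ge> 18" unfolding c0_def using th a by simp
    hence "(k + 1) * c0 \<ge> (k + 1) * 18" using k by (intro mult_left_mono) auto
    moreover have "C0_c a th k = 12 * k + 4 * ((k + 1) * c0) + 10" unfolding C0_c_def c0_def by simp
    moreover have "2 * (k + 1) * c0 = 2 * ((k + 1) * c0)" by simp
    moreover have "(k + 1) * 18 = 18 * k + 18" by simp
    ultimately show ?thesis using k by linarith
  qed
  have "2 * (k + 1) * c0 * s * Q + 4 * k * s * Q + 16 * k * s * Q + 4 * k * s * Q + 2 * s * Q + 8 * s * Q
      = (2 * (k + 1) * c0 + 24 * k + 10) * (s * Q)" by (simp add: algebra_simps)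
  also have "\<dots> \<le> C0_c a th k * (s * Q)" using cc s0 Q0 by (intro mult_right_mono) auto
  finally show ?thesis using tot unfolding vv_def Q_def by (simp add: mult.assoc)
qed
lemma H_lower:
  fixes a k w vv X Y M1 :: real
  assumes a: "a > 0" and k: "k \<ge> 1" and ka: "3/4 * k * a^2 \<ge> a + 1" and w: "0 \<le> w" "w \<le> 1"
    and v: "0 \<le> vv" "vv \<le> a/2" and M: "M1 \<le> 3/4 * k * a^2 - a - 1" "M1 \<le> k - 1"
  shows "M1 * (X^2 + Y^2) \<le> k * ((a^2 - vv^2) * X^2 + Y^2) - 2 * w * (vv * X^2 + Y * X)"
proof -
  have v2: "vv^2 \<le> a^2/4"
  proof -
    have "vv * vv \<le> (a/2) * (a/2)" using v by (intro mult_mono) auto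
    thus ?thesis by (simp add: power2_eq_square)
  qed
  have A: "a^2 - vv^2 \<ge> 3/4 * a^2" using v2 by simp
  have t1: "k * (3/4 * a^2) * X^2 \<le> k * (a^2 - vv^2) * X^2"
    using A k by (intro mult_right_mono mult_left_mono) auto
  have t2: "2 * w * vv * X^2 \<le> a * X^2"
  proof -
    have "w * vv \<le> 1 * (a/2)" using w v by (intro mult_mono) auto
    hence "2 * w * vv \<le> a" by simp
    thus ?thesis using mult_right_mono[of "2 * w * vv" a "X^2"] by simp
  qed
  have t3: "2 * w * Y * X \<le> X^2 + Y^2"
  proof -
    have "\<bar>w * (Y * X)\<bar> \<le> \<bar>Y * X\<bar>" using w by (simp add: abs_mult mult_left_le_one_le)
    moreover have "2 * \<bar>Y * X\<bar> \<le> X^2 + Y^2"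
    proof -
      have "0 \<le> (\<bar>X\<bar> - \<bar>Y\<bar>)^2" by simp
      thus ?thesis by (simp add: power2_eq_square abs_mult algebra_simps)
    qed
    ultimately show ?thesis by (simp add: mult.assoc)
  qed
  have "M1 * X^2 \<le> (3/4 * k * a^2 - a - 1) * X^2" using M by (intro mult_right_mono) auto
  moreover have "M1 * Y^2 \<le> (k - 1) * Y^2" using M by (intro mult_right_mono) auto
  ultimately show ?thesis using t1 t2 t3 by (simp add: algebra_simps)
qed

lemma H_upper:
  fixes a k w vv X Y :: real
  assumes a: "a > 0" and k: "k \<ge> 1" and ka: "3/4 * k * a^2 \<ge> a + 1" and w: "0 \<le> w" "w \<le> 1"
    and v: "0 \<le> vv" "vv \<le> a/2"
  shows "k * ((a^2 - vv^2) * X^2 + Y^2) - 2 * w * (vv * X^2 + Y * X) \<le> 2 * k * ((a^2 - vv^2) * X^2 + Y^2)"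
proof -
  have v2: "vv^2 \<le> a^2/4"
  proof -
    have "vv * vv \<le> (a/2) * (a/2)" using v by (intro mult_mono) auto
    thus ?thesis by (simp add: power2_eq_square)
  qed
  have A: "a^2 - vv^2 \<ge> 3/4 * a^2" using v2 by simp
  have kA: "k * (a^2 - vv^2) \<ge> 1"
  proof -
    have "k * (3/4 * a^2) \<le> k * (a^2 - vv^2)" using A k by (intro mult_left_mono) auto
    thus ?thesis using ka a by simp
  qed
  have t1: "X^2 \<le> k * (a^2 - vv^2) * X^2" using kA mult_right_mono[of 1 "k * (a^2 - vv^2)" "X^2"] by simp
  have t2: "0 \<le> 2 * w * vv * X^2" using w v by simp
  have t3: "- 2 * w * Y * X \<le> X^2 + Y^2"
  proof -
    have "\<bar>w * (Y * X)\<bar> \<le> \<bar>Y * X\<bar>" using w by (simp add: abs_mult mult_left_le_one_le)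
    moreover have "2 * \<bar>Y * X\<bar> \<le> X^2 + Y^2"
    proof -
      have "0 \<le> (\<bar>X\<bar> - \<bar>Y\<bar>)^2" by simp
      thus ?thesis by (simp add: power2_eq_square abs_mult algebra_simps)
    qed
    ultimately show ?thesis by (simp add: mult.assoc)
  qed
  have t4: "Y^2 \<le> k * Y^2" using k mult_right_mono[of 1 k "Y^2"] by simp
  show ?thesis using t1 t2 t3 t4 by (simp add: algebra_simps)
qed

lemma P_L_bound:
  fixes k A vv X Y a :: real
  assumes "0 \<le> A" "A \<le> a^2" "0 \<le> vv" "0 \<le> k"
  shows "2 * k * A * Y * X - 2 * k * vv * Y^2 - exp (- 1) * A * X^2 - exp (- 1) * Y^2 \<le> exp 1 * k^2 * a^2 * Y^2"
proof -
  have e: "exp (- 1) * exp 1 = (1::real)" by (simp add: exp_minus)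
  have "0 \<le> A * exp (- 1) * (X - exp 1 * k * Y)^2" using assms by simp
  also have "A * exp (- 1) * (X - exp 1 * k * Y)^2 = exp (- 1) * A * X^2 - 2 * k * A * Y * X * (exp (- 1) * exp 1)
     + A * k^2 * Y^2 * exp 1 * (exp (- 1) * exp 1)"
    by (simp add: power2_eq_square algebra_simps)
  finally have h: "0 \<le> exp (- 1) * A * X^2 - 2 * k * A * Y * X + A * k^2 * Y^2 * exp 1" unfolding e by simp
  have m: "A * k^2 * Y^2 * exp 1 \<le> a^2 * k^2 * Y^2 * exp 1"
    using assms by (intro mult_right_mono) auto
  have z: "0 \<le> 2 * k * vv * Y^2" "0 \<le> exp (- 1) * Y^2" using assms by auto
  have "exp 1 * k^2 * a^2 * Y^2 = a^2 * k^2 * Y^2 * exp 1" by simp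
  thus ?thesis using h m z by linarith
qed

lemma P_0_bound:
  fixes k A vv Y :: real
  assumes "k^2 * A \<ge> 2 * k * vv + 1"
  shows "0 \<le> 2 * k * A * Y * (k * Y) - 2 * k * vv * Y^2 - 1 * A * (k * Y)^2 - 1 * Y^2"
proof -
  have "2 * k * A * Y * (k * Y) - 2 * k * vv * Y^2 - 1 * A * (k * Y)^2 - 1 * Y^2 = Y^2 * (k^2 * A - 2 * k * vv - 1)"
    by (simp add: power2_eq_square algebra_simps)
  thus ?thesis using assms by simp
qed

lemma pw_ident:
  fixes k w L Fv vv Mx A Nx c Uu d X Y Z a :: real
  assumes "L \<noteq> 0" "Z = Fv - 2 * vv * Mx + A * Nx" "vv = c + Uu" "A = a^2 - vv^2"
  shows "k * (-2 * vv * Y * X^2 + 2 * A * X * Mx + 2 * Y * Z) - 2 * w * (Y * X^2 + 2 * vv * X * Mx + Z * X + Y * Mx)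
   = (2 * k * ((-2 * vv * (d+X)) * Y * X + A * Mx * X + A * Y * Nx) - 2 * k * ((d+X) * Y^2 + 2 * vv * Y * Mx)
      - ((-w/L) * A * X^2 + w * (-2 * vv * (d+X)) * X^2 + 2 * w * A * X * Nx) - ((-w/L) * Y^2 + 2 * w * Y * Mx))
     + (-(w/L) * (A * X^2+Y^2) + (2 * (k * Y - w * X) * Fv - 2 * k * vv * Y * X^2 + 4 * k * vv * (d+X) * Y * X + 2 * k * (d+X) * Y^2 - 2 * w * Y * X^2 - 2 * w * vv * (d+X) * X^2))"
  using assms(1) by (simp only: assms(2,4,3)) (simp add: field_simps power2_eq_square)


lemma deriv_unique_Icc:
  fixes f :: "real \<Rightarrow> real"
  shows "a < b \<Longrightarrow> x \<in> {a..b} \<Longrightarrow> (f has_real_derivative f1) (at x within {a..b})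
   \<Longrightarrow> (f has_real_derivative f2) (at x within {a..b}) \<Longrightarrow> f1 = f2"
  by (metis box_real(2) vector_derivative_unique_within_closed_interval has_real_derivative_iff_has_vector_derivative)

lemma slice1:
  assumes "continuous_on (S \<times> R) (\<lambda>(t, x). f t x)" "t \<in> S"
  shows "continuous_on R (f t)"
proof -
  have "continuous_on R (\<lambda>x. (\<lambda>(t, x). f t x) (t, x))"
    by (rule continuous_on_compose2[OF assms(1)]) (use assms(2) in \<open>auto intro!: continuous_intros\<close>)
  thus ?thesis by simp
qed

lemma slice2:
  assumes "continuous_on (S \<times> R) (\<lambda>(t, x). f t x)" "x \<in> R"
  shows "continuous_on S (\<lambda>t. f t x)"
proof -
  have "continuous_on S (\<lambda>t. (\<lambda>(t, x). f t x) (t, x))"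
    by (rule continuous_on_compose2[OF assms(1)]) (use assms(2) in \<open>auto intro!: continuous_intros\<close>)
  thus ?thesis by simp
qed

lemma ftc_real:
  fixes f f' :: "real \<Rightarrow> real"
  assumes "a \<le> b" "\<And>x. x \<in> {a..b} \<Longrightarrow> (f has_real_derivative f' x) (at x within {a..b})"
  shows "integral {a..b} f' = f b - f a"
  using fundamental_theorem_of_calculus[OF assms(1), of f f'] assms(2)
  by (simp add: has_real_derivative_iff_has_vector_derivative integral_unique)

lemma mixed_eq:
  fixes u ut ux uxt utx :: "real \<Rightarrow> real \<Rightarrow> real" and T L :: real
  assumes T: "T > 0" and L: "L > 0"
    and ux_cont: "continuous_on ({0..T} \<times> {0..L}) (\<lambda>(t, x). ux t x)"
    and uxt_cont: "continuous_on ({0..T} \<times> {0..L}) (\<lambda>(t, x). uxt t x)"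
    and u_dt: "\<And>t x. t \<in> {0..T} \<Longrightarrow> x \<in> {0..L} \<Longrightarrow>
        ((\<lambda>s. u s x) has_real_derivative ut t x) (at t within {0..T})"
    and u_dx: "\<And>t x. t \<in> {0..T} \<Longrightarrow> x \<in> {0..L} \<Longrightarrow>
        ((\<lambda>y. u t y) has_real_derivative ux t x) (at x within {0..L})"
    and ut_dx: "\<And>t x. t \<in> {0..T} \<Longrightarrow> x \<in> {0..L} \<Longrightarrow>
        ((\<lambda>y. ut t y) has_real_derivative utx t x) (at x within {0..L})"
    and ux_dt: "\<And>t x. t \<in> {0..T} \<Longrightarrow> x \<in> {0..L} \<Longrightarrow>
        ((\<lambda>s. ux s x) has_real_derivative uxt t x) (at t within {0..T})"
    and tx: "t \<in> {0..T}" "x \<in> {0..L}"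
  shows "utx t x = uxt t x"
proof -
  have I: "u s y - u s 0 = integral {0..y} (ux s)" if "s \<in> {0..T}" "y \<in> {0..L}" for s y
  proof -
    have "integral {0..y} (ux s) = u s y - u s 0"
      by (rule ftc_real) (use that in \<open>auto intro!: DERIV_subset[OF u_dx]\<close>)
    thus ?thesis by simp
  qed
  have J: "ut t y - ut t 0 = integral {0..y} (uxt t)" if y: "y \<in> {0..L}" for y
  proof -
    have d1: "((\<lambda>s. u s y - u s 0) has_real_derivative ut t y - ut t 0) (at t within {0..T})"
      using u_dt[OF tx(1) y] u_dt[OF tx(1), of 0] L by (auto intro!: derivative_eq_intros)
    have d2: "((\<lambda>s. integral (cbox 0 y) (ux s)) has_real_derivative integral (cbox 0 y) (uxt t)) (at t within {0..T})"
    proof (rule leibniz_rule_field_derivative)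
      show "\<And>s z. s \<in> {0..T} \<Longrightarrow> z \<in> cbox 0 y \<Longrightarrow> ((\<lambda>s. ux s z) has_field_derivative uxt s z) (at s within {0..T})"
        using ux_dt y by auto
      show "\<And>s. s \<in> {0..T} \<Longrightarrow> ux s integrable_on cbox 0 y"
      proof -
        fix s assume "s \<in> {0..T}"
        hence "continuous_on {0..y} (ux s)" using y by (intro continuous_on_subset[OF slice1[OF ux_cont]]) auto
        thus "ux s integrable_on cbox 0 y" by (simp add: integrable_continuous_interval)
      qed
      show "continuous_on ({0..T} \<times> cbox 0 y) (\<lambda>(s, z). uxt s z)"
        using y by (auto intro!: continuous_on_subset[OF uxt_cont])
    qed (use tx in auto)
    have d3: "((\<lambda>s. integral {0..y} (ux s)) has_real_derivative ut t y - ut t 0) (at t within {0..T})"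
      by (rule has_field_derivative_transform_within[OF d1 zero_less_one]) (use tx I y in auto)
    show ?thesis using deriv_unique_Icc[OF T tx(1) d3] d2 by simp
  qed
  have e1: "((\<lambda>y. ut t y - ut t 0) has_real_derivative utx t x) (at x within {0..L})"
    using ut_dx[OF tx] by (auto intro!: derivative_eq_intros)
  have e2: "((\<lambda>y. integral {0..y} (uxt t)) has_real_derivative uxt t x) (at x within {0..L})"
    by (rule integral_has_real_derivative[OF slice1[OF uxt_cont tx(1)] tx(2)])
  have e3: "((\<lambda>y. integral {0..y} (uxt t)) has_real_derivative utx t x) (at x within {0..L})"
    by (rule has_field_derivative_transform_within[OF e1 zero_less_one]) (use tx J in auto)
  show ?thesis using deriv_unique_Icc[OF L tx(2) e3 e2] .
qed

lemma cs_int: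
  fixes g :: "real \<Rightarrow> real"
  assumes pq: "p \<le> q" and g: "continuous_on {p..q} g"
  shows "(integral {p..q} g)^2 \<le> (q - p) * integral {p..q} (\<lambda>x. (g x)^2)"
proof -
  define l where "l = q - p"
  define I1 where "I1 = integral {p..q} g"
  define I2 where "I2 = integral {p..q} (\<lambda>x. (g x)^2)"
  have h1: "(g has_integral I1) {p..q}" unfolding I1_def using g
    by (intro integrable_integral integrable_continuous_interval)
  have h2: "((\<lambda>x. (g x)^2) has_integral I2) {p..q}" unfolding I2_def using g
    by (intro integrable_integral integrable_continuous_interval continuous_intros)
  have h3: "((\<lambda>x. (g x)^2 * l^2 - g x * (2 * l * I1) + I1^2) has_integral (I2 * l^2 - I1 * (2 * l * I1) + l * I1^2)) {p..q}"
  proof -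
    have c: "((\<lambda>x. I1^2) has_integral l * I1^2) {p..q}"
      using has_integral_const_real[of "I1^2" p q] pq unfolding l_def by simp
    show ?thesis
      by (intro has_integral_add has_integral_diff has_integral_mult_left h1 h2 c)
  qed
  have "0 \<le> I2 * l^2 - I1 * (2 * l * I1) + l * I1^2"
  proof (rule has_integral_nonneg[OF h3])
    fix x
    have "0 \<le> (l * g x - I1)^2" by simp
    thus "0 \<le> (g x)^2 * l^2 - g x * (2 * l * I1) + I1^2" by (simp add: power2_eq_square algebra_simps)
  qed
  hence key: "0 \<le> l * (l * I2 - I1^2)" by (simp add: power2_eq_square algebra_simps)
  show ?thesis
  proof (cases "p = q")
    case True thus ?thesis by simp
  next
    case False
    hence "l > 0" using pq unfolding l_def by simp
    hence "0 \<le> l * I2 - I1^2" using key by (simp add: zero_le_mult_iff)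
    thus ?thesis unfolding l_def I1_def I2_def by simp
  qed
qed

lemma poincare:
  fixes f f' :: "real \<Rightarrow> real" and L :: real
  assumes L: "L > 0" and c: "continuous_on {0..L} f'"
    and d: "\<And>x. x \<in> {0..L} \<Longrightarrow> (f has_real_derivative f' x) (at x within {0..L})"
  shows "integral {0..L} (\<lambda>x. (f x)^2) \<le> 2 * L * (f L)^2 + 2 * L^2 * integral {0..L} (\<lambda>x. (f' x)^2)"
proof -
  define I2 where "I2 = integral {0..L} (\<lambda>x. (f' x)^2)"
  have fc: "continuous_on {0..L} f" by (rule DERIV_continuous_on[OF d])
  have pt: "(f x)^2 \<le> 2 * (f L)^2 + 2 * L * I2" if x: "x \<in> {0..L}" for x
  proof -
    have e: "integral {x..L} f' = f L - f x"
      by (rule ftc_real) (use x in \<open>auto intro!: DERIV_subset[OF d]\<close>)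
    have cs: "(integral {x..L} f')^2 \<le> (L - x) * integral {x..L} (\<lambda>y. (f' y)^2)"
      using x by (intro cs_int continuous_on_subset[OF c]) auto
    have mono: "integral {x..L} (\<lambda>y. (f' y)^2) \<le> I2"
    proof -
      have ic: "(\<lambda>y. (f' y)^2) integrable_on {0..L}"
        by (intro integrable_continuous_interval continuous_intros c)
      have "integral {0..x} (\<lambda>y. (f' y)^2) + integral {x..L} (\<lambda>y. (f' y)^2) = I2"
        unfolding I2_def using Henstock_Kurzweil_Integration.integral_combine[of 0 x L "\<lambda>y. (f' y)^2"] x ic by simp
      moreover have "0 \<le> integral {0..x} (\<lambda>y. (f' y)^2)"
        using x by (intro integral_nonneg integrable_on_subinterval[OF ic]) auto
      ultimately show ?thesis by linarith
    qed
    have I2p: "0 \<le> integral {x..L} (\<lambda>y. (f' y)^2)"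
      using x by (intro integral_nonneg integrable_continuous_interval continuous_intros continuous_on_subset[OF c]) auto
    have "(L - x) * integral {x..L} (\<lambda>y. (f' y)^2) \<le> L * I2"
      using x mono I2p by (intro mult_mono) auto
    hence sq: "(f L - f x)^2 \<le> L * I2" using cs e by simp
    have "(f x)^2 \<le> 2 * (f L)^2 + 2 * (f L - f x)^2"
    proof -
      have "0 \<le> (2 * f L - f x)^2" by simp
      thus ?thesis by (simp add: power2_eq_square algebra_simps)
    qed
    thus ?thesis using sq by linarith
  qed
  have "integral {0..L} (\<lambda>x. (f x)^2) \<le> integral {0..L} (\<lambda>x. 2 * (f L)^2 + 2 * L * I2)"
    by (intro integral_le integrable_continuous_interval continuous_intros fc pt) auto
  also have "\<dots> = L * (2 * (f L)^2 + 2 * L * I2)" using L by simp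
  finally show ?thesis unfolding I2_def by (simp add: power2_eq_square algebra_simps)
qed

lemma int_diff_bound:
  fixes E1 E1' g :: "real \<Rightarrow> real" and p q :: real
  assumes pq: "p \<le> q" and sub: "0 \<le> p" "q \<le> T"
    and dE: "\<And>\<tau>. \<tau> \<in> {0..T} \<Longrightarrow> (E1 has_real_derivative E1' \<tau>) (at \<tau> within {0..T})"
    and gc: "continuous_on {p..q} g"
    and bnd: "\<And>\<tau>. \<tau> \<in> {0..T} \<Longrightarrow> E1' \<tau> \<le> g \<tau>"
  shows "E1 q - E1 p \<le> integral {p..q} g"
proof -
  define phi where "phi \<tau> = E1 \<tau> - integral {p..\<tau>} g" for \<tau>
  have E1c: "continuous_on {0..T} E1" by (rule DERIV_continuous_on[OF dE])
  have "phi q \<le> phi p"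
  proof (rule DERIV_nonpos_imp_decreasing_open[OF pq])
    fix x assume x: "p < x" "x < q"
    have d1: "(E1 has_real_derivative E1' x) (at x)"
      using dE[of x] x sub at_within_Icc_at[of 0 x T] by auto
    have d2: "((\<lambda>\<tau>. integral {p..\<tau>} g) has_real_derivative g x) (at x)"
      using integral_has_real_derivative[OF gc, of x] x at_within_Icc_at[of p x q] by auto
    have "(phi has_real_derivative E1' x - g x) (at x)"
      unfolding phi_def using DERIV_diff[OF d1 d2] by simp
    moreover have "E1' x - g x \<le> 0" using bnd[of x] x sub by auto
    ultimately show "\<exists>y. (phi has_real_derivative y) (at x) \<and> y \<le> 0" by blast
  next
    show "continuous_on {p..q} phi" unfolding phi_def
      by (intro continuous_intros continuous_on_subset[OF E1c] indefinite_integral_continuous_1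
          integrable_continuous_interval gc) (use sub in auto)
  qed
  thus ?thesis unfolding phi_def by simp
qed

lemma energy_decay:
  fixes E1 E1' h :: "real \<Rightarrow> real" and T Tp mu nu Cnu Cg t :: real
  assumes Tp: "Tp > 0" "T > Tp" and mu: "mu > 0" "nu > mu" and Cg: "Cg \<ge> 0" and Cnu: "Cnu > 0"
    and dE: "\<And>\<tau>. \<tau> \<in> {0..T} \<Longrightarrow> (E1 has_real_derivative E1' \<tau>) (at \<tau> within {0..T})"
    and hc: "continuous_on {0..T} h"
    and bnd: "\<And>\<tau>. \<tau> \<in> {0..T} \<Longrightarrow> E1' \<tau> \<le> -mu * E1 \<tau> + Cg * h \<tau>"
    and hdec: "\<And>t. t \<in> {Tp<..<T} \<Longrightarrow> integral {t - Tp..t} h \<le> Cnu * exp (- nu * t)"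
    and t: "t \<in> {Tp..T}"
  shows "integral {t - Tp..t} E1 \<le> exp (- mu * (t - Tp)) * (integral {Tp - Tp..Tp} E1 + Cg * Cnu / (nu - mu))"
proof -
  have E1c: "continuous_on {0..T} E1" by (rule DERIV_continuous_on[OF dE])
  define G where "G s = integral {0..s} E1" for s
  define Ew where "Ew s = G s - G (s - Tp)" for s
  have eqE: "integral {s - Tp..s} E1 = Ew s" if s: "s \<in> {Tp..T}" for s
  proof -
    have "E1 integrable_on {0..s}"
      using s Tp by (intro integrable_continuous_interval continuous_on_subset[OF E1c]) auto
    hence "integral {0..s - Tp} E1 + integral {s - Tp..s} E1 = integral {0..s} E1"
      using Henstock_Kurzweil_Integration.integral_combine[of 0 "s - Tp" s E1] s Tp by simp
    thus ?thesis unfolding Ew_def G_def by simp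
  qed
  have dG: "(G has_real_derivative E1 x) (at x)" if "0 < x" "x < T" for x
    using integral_has_real_derivative[OF E1c, of x] that at_within_Icc_at[of 0 x T]
    unfolding G_def by auto
  have Gc: "continuous_on {0..T} G" unfolding G_def
    by (intro indefinite_integral_continuous_1 integrable_continuous_interval E1c)
  have Ewc: "continuous_on {Tp..T} Ew" unfolding Ew_def
    by (intro continuous_intros continuous_on_subset[OF Gc]
        continuous_on_compose2[OF Gc, of _ "\<lambda>s. s - Tp"]) (use Tp in auto)
  have dEw: "(Ew has_real_derivative E1 s - E1 (s - Tp)) (at s)" if s: "Tp < s" "s < T" for s
  proof -
    have "((\<lambda>s. G (s - Tp)) has_real_derivative E1 (s - Tp) * 1) (at s)"
      by (rule DERIV_chain2[OF dG]) (use s Tp in \<open>auto intro!: derivative_eq_intros\<close>)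
    thus ?thesis unfolding Ew_def using dG[of s] s Tp by (auto intro!: derivative_eq_intros)
  qed
  have dEw_bnd: "E1 s - E1 (s - Tp) \<le> -mu * Ew s + Cg * (Cnu * exp (- nu * s))"
    if s: "Tp < s" "s < T" for s
  proof -
    have "E1 s - E1 (s - Tp) \<le> integral {s - Tp..s} (\<lambda>\<tau>. -mu * E1 \<tau> + Cg * h \<tau>)"
      by (rule int_diff_bound[OF _ _ _ dE _ bnd])
         (use s Tp in \<open>auto intro!: continuous_intros continuous_on_subset[OF E1c] continuous_on_subset[OF hc]\<close>)
    also have "\<dots> = -mu * integral {s - Tp..s} E1 + Cg * integral {s - Tp..s} h"
    proof -
      have i1: "E1 integrable_on {s - Tp..s}" using s Tp
        by (intro integrable_continuous_interval continuous_on_subset[OF E1c]) auto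
      have i2: "h integrable_on {s - Tp..s}" using s Tp
        by (intro integrable_continuous_interval continuous_on_subset[OF hc]) auto
      have i3: "(\<lambda>\<tau>. -mu * E1 \<tau>) integrable_on {s - Tp..s}"
        using integrable_on_cmult_left[OF i1, of "-mu"] by simp
      have i4: "(\<lambda>\<tau>. Cg * h \<tau>) integrable_on {s - Tp..s}"
        using integrable_on_cmult_left[OF i2, of "Cg"] by simp
      show ?thesis using integral_add[OF i3 i4] by simp
    qed
    also have "\<dots> \<le> -mu * Ew s + Cg * (Cnu * exp (- nu * s))"
      using eqE[of s] s hdec[of s] Cg by (auto intro!: mult_left_mono)
    finally show ?thesis .
  qed
  define D where "D = nu - mu"
  have D: "D > 0" unfolding D_def using mu by simp
  define K where "K = Cg * Cnu"
  have K: "K \<ge> 0" unfolding K_def using Cg Cnu by simp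
  define psi where "psi s = exp (mu * s) * Ew s + K / D * exp (- D * s)" for s
  have "psi t \<le> psi Tp"
  proof (rule DERIV_nonpos_imp_decreasing_open[of Tp t psi])
    show "Tp \<le> t" using t by simp
  next
    fix x assume x: "Tp < x" "x < t"
    hence xT: "x < T" using t by simp
    have d1: "((\<lambda>s. exp (mu * s)) has_real_derivative exp (mu * x) * mu) (at x)"
      by (auto intro!: derivative_eq_intros)
    have d2: "((\<lambda>s. exp (- D * s)) has_real_derivative exp (- D * x) * (- D)) (at x)"
      by (auto intro!: derivative_eq_intros)
    have d: "(psi has_real_derivative exp (mu * x) * mu * Ew x + (E1 x - E1 (x - Tp)) * exp (mu * x)
               + K / D * (exp (- D * x) * (- D))) (at x)"
      unfolding psi_def by (intro DERIV_add DERIV_mult DERIV_cmult d1 d2 dEw x xT)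
    have "exp (mu * x) * (E1 x - E1 (x - Tp)) \<le> exp (mu * x) * (-mu * Ew x + Cg * (Cnu * exp (- nu * x)))"
      using dEw_bnd[OF x(1) xT] by (intro mult_left_mono) auto
    moreover have "exp (mu * x) * exp (- nu * x) = exp (- D * x)"
      unfolding D_def by (simp add: exp_add[symmetric] algebra_simps)
    moreover have "K / D * (exp (- D * x) * (- D)) = - K * exp (- D * x)" using D by simp
    ultimately have "exp (mu * x) * mu * Ew x + (E1 x - E1 (x - Tp)) * exp (mu * x)
               + K / D * (exp (- D * x) * (- D)) \<le> 0"
      unfolding K_def by (simp add: algebra_simps)
    thus "\<exists>y. (psi has_real_derivative y) (at x) \<and> y \<le> 0" using d by blast
  next
    show "continuous_on {Tp..t} psi" unfolding psi_def
      by (intro continuous_intros continuous_on_subset[OF Ewc]) (use t D in auto)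
  qed
  have A: "exp (mu * t) * Ew t \<le> exp (mu * Tp) * Ew Tp + K * exp (- D * Tp) / D"
  proof -
    have "0 \<le> K / D * exp (- D * t)" using K D by simp
    moreover have "K / D * exp (- D * Tp) = K * exp (- D * Tp) / D" by simp
    ultimately show ?thesis using \<open>psi t \<le> psi Tp\<close> unfolding psi_def by linarith
  qed
  have B: "exp (- D * Tp) \<le> exp (mu * Tp)"
  proof -
    have "0 \<le> D * Tp" "0 \<le> mu * Tp" using D mu Tp by auto
    thus ?thesis by simp
  qed
  have "Ew t = exp (- mu * t) * (exp (mu * t) * Ew t)" by (simp add: exp_minus field_simps)
  also have "\<dots> \<le> exp (- mu * t) * (exp (mu * Tp) * Ew Tp + K * exp (- D * Tp) / D)"
    using A by (intro mult_left_mono) auto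
  also have "\<dots> \<le> exp (- mu * t) * (exp (mu * Tp) * Ew Tp + K * exp (mu * Tp) / D)"
    using B K D by (intro mult_left_mono add_left_mono divide_right_mono) (auto intro: mult_left_mono)
  also have "\<dots> = exp (- mu * (t - Tp)) * (Ew Tp + K / D)"
    by (simp add: exp_add[symmetric] algebra_simps add_divide_distrib)
  finally have "Ew t \<le> exp (- mu * (t - Tp)) * (Ew Tp + K / D)" .
  moreover have "integral {t - Tp..t} E1 = Ew t" using eqE t by simp
  moreover have "integral {Tp - Tp..Tp} E1 = Ew Tp" using eqE[of Tp] Tp by simp
  ultimately show ?thesis unfolding K_def D_def by simp
qed

theorem theorem2:
  fixes a \<theta> L lam k Tp T \<nu> C\<nu> :: real
    and ub ubx :: "real \<Rightarrow> real"
    and b bt btt :: "real \<Rightarrow> 'w \<Rightarrow> real" and \<omega> :: 'w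
    and u ut ux utt utx uxt uxx :: "real \<Rightarrow> real \<Rightarrow> real"
    and \<phi> \<psi> :: "real \<Rightarrow> real"
  assumes a_pos: "a > 0" and theta_nn: "\<theta> \<ge> 0" and L_pos: "L > 0"
    and lam: "1/2 < lam" "lam < 1"
    and k_ge: "k \<ge> Max {1, 4/3 * (1/a + 1/a\<^sup>2), 1 / (lam * a)}"
    \<comment> \<open>stationary state: ubar in C^1([0,L]), positive, solving the ODE\<close>
    and ub_C1: "continuous_on {0..L} ub" "continuous_on {0..L} ubx"
    and ub_deriv: "\<And>x. x \<in> {0..L} \<Longrightarrow> (ub has_real_derivative ubx x) (at x within {0..L})"
    and ub_ode: "\<And>x. x \<in> {0..L} \<Longrightarrow>
        ubx x = \<theta> / 2 * (\<bar>ub x\<bar> * (ub x)\<^sup>2) / (a\<^sup>2 - (ub x)\<^sup>2)"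
    and ub_pos: "\<And>x. x \<in> {0..L} \<Longrightarrow> ub x > 0"
    and ub_bound: "\<And>x. x \<in> {0..L} \<Longrightarrow>
        ub x \<le> Min {1, 1 / (4 * k * exp 1), (1 - lam) * a / 2,
                    mu_c L k / (C0_c a \<theta> k * K1_c a L k)}"
    and ubx_bound: "\<And>x. x \<in> {0..L} \<Longrightarrow>
        ubx x \<le> min 1 (mu_c L k / (C0_c a \<theta> k * K1_c a L k))"
    and Tp_pos: "Tp > 0" and T_gt: "T > Tp"
    \<comment> \<open>boundary data b(.,omega) in C^2([0,T])\<close>
    and b_C2: "continuous_on {0..T} (\<lambda>t. b t \<omega>)" "continuous_on {0..T} (\<lambda>t. bt t \<omega>)"
              "continuous_on {0..T} (\<lambda>t. btt t \<omega>)"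
    and b_deriv: "\<And>t. t \<in> {0..T} \<Longrightarrow> ((\<lambda>s. b s \<omega>) has_real_derivative bt t \<omega>) (at t within {0..T})"
    and bt_deriv: "\<And>t. t \<in> {0..T} \<Longrightarrow> ((\<lambda>s. bt s \<omega>) has_real_derivative btt t \<omega>) (at t within {0..T})"
    \<comment> \<open>u in C^2([0,T] x [0,L]) with the given partial derivatives\<close>
    and u_cont: "continuous_on ({0..T} \<times> {0..L}) (\<lambda>(t, x). u t x)"
    and ut_cont: "continuous_on ({0..T} \<times> {0..L}) (\<lambda>(t, x). ut t x)"
    and ux_cont: "continuous_on ({0..T} \<times> {0..L}) (\<lambda>(t, x). ux t x)"
    and utt_cont: "continuous_on ({0..T} \<times> {0..L}) (\<lambda>(t, x). utt t x)"
    and utx_cont: "continuous_on ({0..T} \<times> {0..L}) (\<lambda>(t, x). utx t x)"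
    and uxt_cont: "continuous_on ({0..T} \<times> {0..L}) (\<lambda>(t, x). uxt t x)"
    and uxx_cont: "continuous_on ({0..T} \<times> {0..L}) (\<lambda>(t, x). uxx t x)"
    and u_dt: "\<And>t x. t \<in> {0..T} \<Longrightarrow> x \<in> {0..L} \<Longrightarrow>
        ((\<lambda>s. u s x) has_real_derivative ut t x) (at t within {0..T})"
    and u_dx: "\<And>t x. t \<in> {0..T} \<Longrightarrow> x \<in> {0..L} \<Longrightarrow>
        ((\<lambda>y. u t y) has_real_derivative ux t x) (at x within {0..L})"
    and ut_dt: "\<And>t x. t \<in> {0..T} \<Longrightarrow> x \<in> {0..L} \<Longrightarrow>
        ((\<lambda>s. ut s x) has_real_derivative utt t x) (at t within {0..T})"
    and ut_dx: "\<And>t x. t \<in> {0..T} \<Longrightarrow> x \<in> {0..L} \<Longrightarrow>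
        ((\<lambda>y. ut t y) has_real_derivative utx t x) (at x within {0..L})"
    and ux_dt: "\<And>t x. t \<in> {0..T} \<Longrightarrow> x \<in> {0..L} \<Longrightarrow>
        ((\<lambda>s. ux s x) has_real_derivative uxt t x) (at t within {0..T})"
    and ux_dx: "\<And>t x. t \<in> {0..T} \<Longrightarrow> x \<in> {0..L} \<Longrightarrow>
        ((\<lambda>y. ux t y) has_real_derivative uxx t x) (at x within {0..L})"
    \<comment> \<open>the system\<close>
    and init: "\<And>x. x \<in> {0..L} \<Longrightarrow> u 0 x = \<phi> x" "\<And>x. x \<in> {0..L} \<Longrightarrow> ut 0 x = \<psi> x"
    and pde: "\<And>t x. t \<in> {0..T} \<Longrightarrow> x \<in> {0..L} \<Longrightarrow>
        utt t x + 2 * (ub x + u t x) * utx t x - (a\<^sup>2 - (ub x + u t x)\<^sup>2) * uxx t x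
          = Fsrc a \<theta> (ub x) (ubx x) (u t x) (ux t x) (ut t x)"
    and bc0: "\<And>t. t \<in> {0..T} \<Longrightarrow> ux t 0 = k * ut t 0"
    and bcL: "\<And>t. t \<in> {0..T} \<Longrightarrow> u t L = b t \<omega>"
    \<comment> \<open>smallness of the solution\<close>
    and u_small: "\<And>t x. t \<in> {0..T} \<Longrightarrow> x \<in> {0..L} \<Longrightarrow>
        \<bar>u t x\<bar> \<le> Min {ub 0, (1 - lam) * a / 2, 1 / (4 * k * exp 1)}"
    and u_small2: "\<And>t x. t \<in> {0..T} \<Longrightarrow> x \<in> {0..L} \<Longrightarrow>
        Max {\<bar>u t x\<bar>, \<bar>ux t x\<bar>, \<bar>ut t x\<bar>} \<le> min 1 (mu_c L k / (C0_c a \<theta> k * K1_c a L k))"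
    \<comment> \<open>decay of the boundary data\<close>
    and nu_gt: "\<nu> > mu_c L k" and Cnu_pos: "C\<nu> > 0"
    and b_decay: "\<And>t. t \<in> {Tp<..<T} \<Longrightarrow>
        integral {t - Tp..t} (\<lambda>\<tau>. \<bar>b \<tau> \<omega>\<bar>\<^sup>2 + \<bar>bt \<tau> \<omega>\<bar>\<^sup>2) \<le> C\<nu> * exp (- \<nu> * t)"
  shows "(\<forall>t \<in> {Tp<..<T}.
            Een a L k Tp ub u ux ut t
              \<le> exp (- mu_c L k * (t - Tp)) *
                 (Een a L k Tp ub u ux ut Tp
                  + ((4/3 * exp 1 * a\<^sup>2 * k\<^sup>2 + 1 / (2 * exp 1 * K1_c a L k * k)) * C\<nu>)
                    / (\<nu> - mu_c L k)))
       \<and> ((\<forall>t \<in> {T - Tp..T}. b t \<omega> = 0) \<longrightarrow>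
            H1sq (T - Tp) T L u ux ut
              \<le> K1_c a L k * exp (- mu_c L k * (T - Tp)) *
                 (Een a L k Tp ub u ux ut Tp
                  + ((4/3 * exp 1 * a\<^sup>2 * k\<^sup>2 + 1 / (2 * exp 1 * K1_c a L k * k)) * C\<nu>)
                    / (\<nu> - mu_c L k)))"
proof -
  define mu where "mu = mu_c L k"
  define C0 where "C0 = C0_c a \<theta> k"
  define K1 where "K1 = K1_c a L k"
  define M1 where "M1 = M1_c a k"
  define s where "s = mu / (C0 * K1)"
  define Cg where "Cg = 4/3 * exp 1 * a\<^sup>2 * k\<^sup>2 + 1 / (2 * exp 1 * K1 * k)"
  have kk: "1 \<le> k" "4/3 * (1/a + 1/a\<^sup>2) \<le> k" "1 / (lam * a) \<le> k" using k_ge by auto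
  have k0: "k > 0" using kk by simp
  have ka: "3/4 * k * a^2 \<ge> a + 1"
  proof -
    have "4/3 * (1/a + 1/a^2) * (3/4 * a^2) \<le> k * (3/4 * a^2)" using kk(2) a_pos by (intro mult_right_mono) auto
    moreover have "4/3 * (1/a + 1/a^2) * (3/4 * a^2) = a + 1" using a_pos by (simp add: field_simps power2_eq_square)
    ultimately show ?thesis by simp
  qed
  have mu_pos: "mu > 0" unfolding mu_def mu_c_def using L_pos k0 by simp
  have C0_pos: "C0 > 0"
  proof -
    have "0 \<le> (1 / a\<^sup>2) * (8 + 6 * \<theta>)" using theta_nn by simp
    hence "0 \<le> 4 * (k + 1) * (18 + 13 * \<theta> + (1 / a\<^sup>2) * (8 + 6 * \<theta>))" using k0 theta_nn by simp
    thus ?thesis unfolding C0_def C0_c_def using k0 by linarith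
  qed
  have ubb: "ub x \<le> 1" "ub x \<le> 1 / (4 * k * exp 1)" "ub x \<le> (1 - lam) * a / 2" "ub x \<le> s"
    if "x \<in> {0..L}" for x
    using ub_bound[OF that] unfolding s_def mu_def C0_def K1_def by auto
  have ubxb: "ubx x \<le> 1" "ubx x \<le> s" if "x \<in> {0..L}" for x
    using ubx_bound[OF that] unfolding s_def mu_def C0_def K1_def by auto
  have usm: "\<bar>u t x\<bar> \<le> ub 0" "\<bar>u t x\<bar> \<le> (1 - lam) * a / 2" "\<bar>u t x\<bar> \<le> 1 / (4 * k * exp 1)"
    if "t \<in> {0..T}" "x \<in> {0..L}" for t x
    using u_small[OF that] by auto
  have usm2: "\<bar>u t x\<bar> \<le> 1" "\<bar>u t x\<bar> \<le> s" "\<bar>ux t x\<bar> \<le> 1" "\<bar>ux t x\<bar> \<le> s"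
     "\<bar>ut t x\<bar> \<le> 1" "\<bar>ut t x\<bar> \<le> s"
    if "t \<in> {0..T}" "x \<in> {0..L}" for t x
    using u_small2[OF that] unfolding s_def mu_def C0_def K1_def by auto
  have s_pos: "s > 0" using ubb(4)[of 0] ub_pos[of 0] L_pos by force
  have K1_pos: "K1 > 0"
  proof -
    have "C0 * K1 > 0" using s_pos mu_pos unfolding s_def by (simp add: zero_less_divide_iff)
    thus ?thesis using C0_pos by (simp add: zero_less_mult_iff)
  qed
  have M1_pos: "M1 > 0"
  proof -
    have "(1 + 2 * L\<^sup>2) / M1 > 0" using K1_pos unfolding K1_def K1_c_def M1_def by simp
    moreover have "1 + 2 * L\<^sup>2 > 0" by (simp add: add_pos_nonneg)
    ultimately show ?thesis by (simp add: zero_less_divide_iff)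
  qed
  have M1le: "M1 \<le> 3/4 * k * a^2 - a - 1" "M1 \<le> k - 1" unfolding M1_def M1_c_def by auto
  have C0s: "C0 * s = mu / K1" unfolding s_def using C0_pos K1_pos by simp
  have lam_a: "(1 - lam) * a / 2 \<le> a / 4" using lam a_pos by (simp add: field_simps)
  have ub_pos': "ub x > 0" "ub x \<le> a / 4" if "x \<in> {0..L}" for x
    using ub_pos[OF that] ubb(3)[OF that] lam_a by linarith+
  have ubx_nn: "0 \<le> ubx x" if x: "x \<in> {0..L}" for x
  proof -
    have "ub x < a" using ub_pos'[OF x] a_pos by simp
    hence "(ub x)\<^sup>2 < a\<^sup>2" using ub_pos'[OF x] by (intro power_strict_mono) auto
    thus ?thesis using ub_ode[OF x] theta_nn by simp
  qed
  have ub_mono: "ub 0 \<le> ub x" if x: "x \<in> {0..L}" for x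
  proof (rule DERIV_nonneg_imp_increasing_open[of 0 x ub])
    show "0 \<le> x" using x by simp
  next
    fix y assume y: "0 < y" "y < x"
    have "(ub has_real_derivative ubx y) (at y)"
      using ub_deriv[of y] y x at_within_Icc_at[of 0 y L] by auto
    thus "\<exists>z. (ub has_real_derivative z) (at y) \<and> 0 \<le> z" using ubx_nn[of y] y x by auto
  next
    show "continuous_on {0..x} ub" using x by (intro continuous_on_subset[OF ub_C1(1)]) auto
  qed
  have T_pos: "T > 0" using Tp_pos T_gt by simp
  have mixed: "uxt t x = utx t x" if "t \<in> {0..T}" "x \<in> {0..L}" for t x
    using mixed_eq[OF T_pos L_pos ux_cont uxt_cont u_dt u_dx ut_dx ux_dt that] by simp
  have utL: "ut t L = bt t \<omega>" if t: "t \<in> {0..T}" for t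
  proof -
    have d1: "((\<lambda>s. u s L) has_real_derivative ut t L) (at t within {0..T})" using u_dt[OF t] L_pos by simp
    have d2: "((\<lambda>s. u s L) has_real_derivative bt t \<omega>) (at t within {0..T})"
      by (rule has_field_derivative_transform_within[OF b_deriv[OF t] zero_less_one]) (use t bcL in auto)
    show ?thesis using deriv_unique_Icc[OF T_pos t d1 d2] .
  qed
  define R where "R = {0..T} \<times> {0..L}"
  have cu: "continuous_on R (\<lambda>p. u (fst p) (snd p))" using u_cont unfolding R_def by (simp add: case_prod_beta')
  have cut: "continuous_on R (\<lambda>p. ut (fst p) (snd p))" using ut_cont unfolding R_def by (simp add: case_prod_beta')
  have cux: "continuous_on R (\<lambda>p. ux (fst p) (snd p))" using ux_cont unfolding R_def by (simp add: case_prod_beta')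
  have cutt: "continuous_on R (\<lambda>p. utt (fst p) (snd p))" using utt_cont unfolding R_def by (simp add: case_prod_beta')
  have cutx: "continuous_on R (\<lambda>p. utx (fst p) (snd p))" using utx_cont unfolding R_def by (simp add: case_prod_beta')
  have cuxt: "continuous_on R (\<lambda>p. uxt (fst p) (snd p))" using uxt_cont unfolding R_def by (simp add: case_prod_beta')
  have cuxx: "continuous_on R (\<lambda>p. uxx (fst p) (snd p))" using uxx_cont unfolding R_def by (simp add: case_prod_beta')
  have cub: "continuous_on R (\<lambda>p. ub (snd p))"
    by (rule continuous_on_compose2[OF ub_C1(1) continuous_on_snd]) (auto simp: R_def)
  have cubx: "continuous_on R (\<lambda>p. ubx (snd p))"
    by (rule continuous_on_compose2[OF ub_C1(2) continuous_on_snd]) (auto simp: R_def)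
  define H where "H t x = k * ((a\<^sup>2 - (ub x + u t x)\<^sup>2) * (ux t x)\<^sup>2 + (ut t x)\<^sup>2)
        - 2 * exp (- x / L) * ((ub x + u t x) * (ux t x)\<^sup>2 + ut t x * ux t x)" for t x
  define Ht where "Ht t x = k * (-2 * (ub x + u t x) * ut t x * (ux t x)^2
        + 2 * (a^2 - (ub x + u t x)^2) * ux t x * uxt t x + 2 * ut t x * utt t x)
     - 2 * exp (- x / L) * (ut t x * (ux t x)^2 + 2 * (ub x + u t x) * ux t x * uxt t x
        + utt t x * ux t x + ut t x * uxt t x)" for t x
  define Pf where "Pf t x = 2 * k * (a^2 - (ub x + u t x)^2) * ut t x * ux t x - 2 * k * (ub x + u t x) * (ut t x)^2
      - exp (- x / L) * (a^2 - (ub x + u t x)^2) * (ux t x)^2 - exp (- x / L) * (ut t x)^2" for t x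
  define Px where "Px t x = 2 * k * ((-2 * (ub x + u t x) * (ubx x + ux t x)) * ut t x * ux t x
        + (a^2 - (ub x + u t x)^2) * utx t x * ux t x + (a^2 - (ub x + u t x)^2) * ut t x * uxx t x)
      - 2 * k * ((ubx x + ux t x) * (ut t x)^2 + 2 * (ub x + u t x) * ut t x * utx t x)
      - ((- exp (- x / L) / L) * (a^2 - (ub x + u t x)^2) * (ux t x)^2
         + exp (- x / L) * (-2 * (ub x + u t x) * (ubx x + ux t x)) * (ux t x)^2
         + 2 * exp (- x / L) * (a^2 - (ub x + u t x)^2) * ux t x * uxx t x)
      - ((- exp (- x / L) / L) * (ut t x)^2 + 2 * exp (- x / L) * ut t x * utx t x)" for t x
  define Qf where "Qf t x = (u t x)^2 + (ux t x)^2 + (ut t x)^2" for t x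
  define hf where "hf t = \<bar>b t \<omega>\<bar>\<^sup>2 + \<bar>bt t \<omega>\<bar>\<^sup>2" for t
  have E1H: "E1 a L k ub u ux ut t = integral {0..L} (H t)" for t
    unfolding E1_def H_def ..
  have cH: "continuous_on R (\<lambda>p. H (fst p) (snd p))" unfolding H_def
    by (intro continuous_intros cu cut cux cub) (use L_pos in auto)
  have cHt: "continuous_on R (\<lambda>p. Ht (fst p) (snd p))" unfolding Ht_def
    by (intro continuous_intros cu cut cux cub cutt cuxt) (use L_pos in auto)
  have cPx: "continuous_on R (\<lambda>p. Px (fst p) (snd p))" unfolding Px_def
    by (intro continuous_intros cu cut cux cub cubx cutx cuxx) (use L_pos in auto)
  have cQ: "continuous_on R (\<lambda>p. Qf (fst p) (snd p))" unfolding Qf_def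
    by (intro continuous_intros cu cut cux)
  have sl: "continuous_on {0..L} (f t)" if "continuous_on R (\<lambda>p. f (fst p) (snd p))" "t \<in> {0..T}" for f :: "real \<Rightarrow> real \<Rightarrow> real" and t
    by (rule slice1[of "{0..T}" "{0..L}" f t]) (use that in \<open>simp_all add: R_def case_prod_beta'\<close>)
  define Rt where "Rt t x = 2 * (k * ut t x - exp (- x / L) * ux t x) * Fsrc a \<theta> (ub x) (ubx x) (u t x) (ux t x) (ut t x)
      - 2 * k * (ub x + u t x) * ut t x * (ux t x)^2
      + 4 * k * (ub x + u t x) * (ubx x + ux t x) * ut t x * ux t x + 2 * k * (ubx x + ux t x) * (ut t x)^2
      - 2 * exp (- x / L) * ut t x * (ux t x)^2 - 2 * exp (- x / L) * (ub x + u t x) * (ubx x + ux t x) * (ux t x)^2" for t x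
  have dH: "((\<lambda>\<tau>. H \<tau> x) has_real_derivative Ht t x) (at t within {0..T})"
    if t: "t \<in> {0..T}" and x: "x \<in> {0..L}" for t x
    unfolding H_def using t x
    by (auto intro!: derivative_eq_intros u_dt ux_dt ut_dt simp: Ht_def algebra_simps power2_eq_square)
  have dP: "((\<lambda>y. Pf t y) has_real_derivative Px t x) (at x within {0..L})"
    if t: "t \<in> {0..T}" and x: "x \<in> {0..L}" for t x
    unfolding Pf_def using t x L_pos
    by (auto intro!: derivative_eq_intros u_dx ux_dx ut_dx ub_deriv simp: Px_def algebra_simps power2_eq_square)
  have pwfacts: "\<bar>u t x\<bar> \<le> ub x" "0 \<le> ub x + u t x" "ub x + u t x \<le> a / 2"
      "0 < exp (- x / L)" "exp (- x / L) \<le> 1" "exp (- 1) \<le> exp (- x / L)"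
    if t: "t \<in> {0..T}" and x: "x \<in> {0..L}" for t x
  proof -
    show u1: "\<bar>u t x\<bar> \<le> ub x" using usm(1)[OF t x] ub_mono[OF x] by linarith
    thus "0 \<le> ub x + u t x" by linarith
    have "ub x + u t x \<le> (1 - lam) * a / 2 + (1 - lam) * a / 2" using ubb(3)[OF x] usm(2)[OF t x] by linarith
    thus "ub x + u t x \<le> a / 2" using lam_a by linarith
    show "0 < exp (- x / L)" by simp
    show "exp (- x / L) \<le> 1" using x L_pos by simp
    have "- 1 \<le> - x / L" using x L_pos by (simp add: field_simps)
    thus "exp (- 1) \<le> exp (- x / L)" by simp
  qed
  have Hlow: "M1 * ((ux t x)^2 + (ut t x)^2) \<le> H t x"
    if t: "t \<in> {0..T}" and x: "x \<in> {0..L}" for t x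
    unfolding H_def
    by (rule H_lower[OF a_pos kk(1) ka]) (use pwfacts[OF t x] M1le in auto)
  have Hup: "H t x \<le> 2 * k * ((a^2 - (ub x + u t x)^2) * (ux t x)^2 + (ut t x)^2)"
    if t: "t \<in> {0..T}" and x: "x \<in> {0..L}" for t x
    unfolding H_def
    by (rule H_upper[OF a_pos kk(1) ka]) (use pwfacts[OF t x] in auto)
  have eqD: "Ht t x = Px t x + (-(exp (- x / L) / L) * ((a^2 - (ub x + u t x)^2) * (ux t x)^2 + (ut t x)^2) + Rt t x)"
    if t: "t \<in> {0..T}" and x: "x \<in> {0..L}" for t x
  proof -
    have Z: "utt t x = Fsrc a \<theta> (ub x) (ubx x) (u t x) (ux t x) (ut t x) - 2 * (ub x + u t x) * utx t x
          + (a^2 - (ub x + u t x)^2) * uxx t x"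
      using pde[OF t x] by (simp add: algebra_simps)
    show ?thesis
      unfolding Ht_def Px_def Rt_def mixed[OF t x]
      by (intro pw_ident[where k=k and w="exp (- x / L)" and L=L and Fv="Fsrc a \<theta> (ub x) (ubx x) (u t x) (ux t x) (ut t x)"
           and vv="ub x + u t x" and Mx="utx t x" and A="a^2 - (ub x + u t x)^2" and Nx="uxx t x" and c="ub x"
           and Uu="u t x" and d="ubx x" and X="ux t x" and Y="ut t x" and Z="utt t x" and a=a] Z refl) (use L_pos in simp)
  qed
  have Rb: "Rt t x \<le> mu / K1 * Qf t x" if t: "t \<in> {0..T}" and x: "x \<in> {0..L}" for t x
  proof -
    have "Rt t x \<le> C0_c a \<theta> k * s * ((u t x)^2 + (ux t x)^2 + (ut t x)^2)"
      unfolding Rt_def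
      by (rule R_bound[OF theta_nn a_pos]) (use ub_pos'[OF x] ubb[OF x] ubx_nn[OF x] ubxb[OF x] usm2[OF t x]
          pwfacts[OF t x] kk(1) in auto)
    thus ?thesis using C0s unfolding C0_def Qf_def by simp
  qed
  have damp: "-(exp (- x / L) / L) * ((a^2 - (ub x + u t x)^2) * (ux t x)^2 + (ut t x)^2) \<le> -2 * mu * H t x"
    if t: "t \<in> {0..T}" and x: "x \<in> {0..L}" for t x
  proof -
    define W where "W = (a^2 - (ub x + u t x)^2) * (ux t x)^2 + (ut t x)^2"
    have W0: "0 \<le> W"
    proof -
      have "(ub x + u t x)^2 \<le> a^2"
        using pwfacts[OF t x] a_pos by (intro power_mono) auto
      thus ?thesis unfolding W_def by simp
    qed
    have "2 * mu * H t x \<le> 2 * mu * (2 * k * W)" using Hup[OF t x] mu_pos unfolding W_def by simp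
    also have "2 * mu * (2 * k * W) = exp (- 1) / L * W"
      unfolding mu_def mu_c_def using k0 L_pos by (simp add: exp_minus field_simps)
    also have "\<dots> \<le> exp (- x / L) / L * W"
      using pwfacts[OF t x] W0 L_pos by (intro mult_right_mono divide_right_mono) auto
    finally show ?thesis unfolding W_def by simp
  qed
  have key: "Ht t x - Px t x \<le> -2 * mu * H t x + mu / K1 * Qf t x"
    if t: "t \<in> {0..T}" and x: "x \<in> {0..L}" for t x
    using eqD[OF t x] Rb[OF t x] damp[OF t x] by linarith
  have PL: "Pf t L \<le> exp 1 * k^2 * a^2 * (bt t \<omega>)^2" if t: "t \<in> {0..T}" for t
  proof -
    have x: "L \<in> {0..L}" using L_pos by simp
    have A: "0 \<le> a^2 - (ub L + u t L)^2" "a^2 - (ub L + u t L)^2 \<le> a^2"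
    proof -
      have "(ub L + u t L)^2 \<le> a^2"
        using pwfacts[OF t x] a_pos by (intro power_mono) auto
      thus "0 \<le> a^2 - (ub L + u t L)^2" by simp
      show "a^2 - (ub L + u t L)^2 \<le> a^2" by simp
    qed
    have e: "exp (- L / L) = exp (- 1)" using L_pos by simp
    show ?thesis unfolding Pf_def e utL[OF t]
      by (rule P_L_bound) (use A pwfacts[OF t x] k0 in auto)
  qed
  have P0: "0 \<le> Pf t 0" if t: "t \<in> {0..T}" for t
  proof -
    have x: "0 \<in> {0..L}" using L_pos by simp
    have v: "0 \<le> ub 0 + u t 0" "ub 0 + u t 0 \<le> a / 2" using pwfacts[OF t x] by auto
    have A: "3/4 * a^2 \<le> a^2 - (ub 0 + u t 0)^2"
    proof -
      have "(ub 0 + u t 0) * (ub 0 + u t 0) \<le> (a/2) * (a/2)" using v by (intro mult_mono) auto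
      thus ?thesis by (simp add: power2_eq_square)
    qed
    have "k * (3/4 * a^2) \<le> k * (a^2 - (ub 0 + u t 0)^2)" using A k0 by (intro mult_left_mono) auto
    hence kA: "a + 1 \<le> k * (a^2 - (ub 0 + u t 0)^2)" using ka by simp
    have "k * (a + 1) \<le> k * (k * (a^2 - (ub 0 + u t 0)^2))" using kA k0 by (intro mult_left_mono) auto
    moreover have "2 * k * (ub 0 + u t 0) \<le> k * a" using v k0 by simp
    ultimately have cond: "2 * k * (ub 0 + u t 0) + 1 \<le> k^2 * (a^2 - (ub 0 + u t 0)^2)"
      using kk(1) by (simp add: power2_eq_square algebra_simps)
    have e: "exp (- 0 / L) = 1" by simp
    show ?thesis unfolding Pf_def e bc0[OF t]
      using P_0_bound[OF cond, of "ut t 0"] by simp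
  qed
  have cbL: "cbox 0 L = {0..L}" by (simp add: box_real(2))
  have intg: "f t integrable_on {0..L}" if "continuous_on R (\<lambda>p. f (fst p) (snd p))" "t \<in> {0..T}" for f :: "real \<Rightarrow> real \<Rightarrow> real" and t
    by (rule integrable_continuous_interval[OF sl[OF that]])
  have dE1: "((\<lambda>\<tau>. E1 a L k ub u ux ut \<tau>) has_real_derivative integral {0..L} (Ht t)) (at t within {0..T})"
    if t: "t \<in> {0..T}" for t
  proof -
    have "((\<lambda>\<tau>. integral (cbox 0 L) (H \<tau>)) has_field_derivative integral (cbox 0 L) (Ht t)) (at t within {0..T})"
    proof (rule leibniz_rule_field_derivative)
      show "\<And>\<tau> x. \<tau> \<in> {0..T} \<Longrightarrow> x \<in> cbox 0 L \<Longrightarrow> ((\<lambda>\<tau>. H \<tau> x) has_field_derivative Ht \<tau> x) (at \<tau> within {0..T})"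
        using dH unfolding cbL by blast
      show "\<And>\<tau>. \<tau> \<in> {0..T} \<Longrightarrow> H \<tau> integrable_on cbox 0 L" using intg[OF cH] unfolding cbL by blast
      show "continuous_on ({0..T} \<times> cbox 0 L) (\<lambda>(\<tau>, x). Ht \<tau> x)"
        using cHt unfolding cbL R_def by (simp add: case_prod_beta')
    qed (use t in auto)
    thus ?thesis unfolding E1H cbL .
  qed
  have Qint: "integral {0..L} (Qf t) \<le> 2 * L * (b t \<omega>)^2 + K1 * E1 a L k ub u ux ut t"
    if t: "t \<in> {0..T}" for t
  proof -
    have iu: "(\<lambda>x. (u t x)^2) integrable_on {0..L}"
      by (intro integrable_continuous_interval continuous_intros sl[OF cu t])
    have ix: "(\<lambda>x. (ux t x)^2) integrable_on {0..L}"
      by (intro integrable_continuous_interval continuous_intros sl[OF cux t])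
    have iy: "(\<lambda>x. (ut t x)^2) integrable_on {0..L}"
      by (intro integrable_continuous_interval continuous_intros sl[OF cut t])
    define IU where "IU = integral {0..L} (\<lambda>x. (u t x)^2)"
    define IX where "IX = integral {0..L} (\<lambda>x. (ux t x)^2)"
    define IY where "IY = integral {0..L} (\<lambda>x. (ut t x)^2)"
    define EE where "EE = E1 a L k ub u ux ut t"
    have IQ: "integral {0..L} (Qf t) = IU + IX + IY"
      unfolding Qf_def IU_def IX_def IY_def
      using integral_add[OF integrable_add[OF iu ix] iy] integral_add[OF iu ix] by simp
    have PU: "IU \<le> 2 * L * (b t \<omega>)^2 + 2 * L^2 * IX"
    proof -
      have "IU \<le> 2 * L * (u t L)^2 + 2 * L^2 * IX" unfolding IU_def IX_def
        by (rule poincare[OF L_pos sl[OF cux t]]) (use u_dx t in auto)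
      thus ?thesis using bcL[OF t] by simp
    qed
    have MH: "M1 * (IX + IY) \<le> EE"
    proof -
      have "integral {0..L} (\<lambda>x. M1 * ((ux t x)^2 + (ut t x)^2)) \<le> integral {0..L} (H t)"
        by (rule integral_le) (use Hlow t intg[OF cH t] in \<open>auto intro!: integrable_continuous_interval
             continuous_intros sl[OF cux t] sl[OF cut t]\<close>)
      moreover have "integral {0..L} (\<lambda>x. M1 * ((ux t x)^2 + (ut t x)^2)) = M1 * (IX + IY)"
        unfolding IX_def IY_def using integral_add[OF ix iy] by simp
      ultimately show ?thesis unfolding EE_def E1H using M1_pos by auto
    qed
    have IXY: "0 \<le> IX" "0 \<le> IY" unfolding IX_def IY_def
      by (intro integral_nonneg ix iy; simp)+
    have "(1 + 2 * L^2) * (IX + IY) = K1 * (M1 * (IX + IY))"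
      unfolding K1_def K1_c_def M1_def[symmetric] using M1_pos by simp
    also have "\<dots> \<le> K1 * EE" using MH K1_pos by (intro mult_left_mono) auto
    finally have "(1 + 2 * L^2) * (IX + IY) \<le> K1 * EE" .
    moreover have "0 \<le> 2 * L^2 * IY" using IXY by simp
    ultimately show ?thesis unfolding IQ EE_def[symmetric] using PU by (simp add: algebra_simps)
  qed
  have bnd: "integral {0..L} (Ht t) \<le> -mu * E1 a L k ub u ux ut t + Cg * hf t"
    if t: "t \<in> {0..T}" for t
  proof -
    define EE where "EE = E1 a L k ub u ux ut t"
    have iHt: "Ht t integrable_on {0..L}" by (rule intg[OF cHt t])
    have iPx: "Px t integrable_on {0..L}" by (rule intg[OF cPx t])
    have iH: "H t integrable_on {0..L}" by (rule intg[OF cH t])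
    have iQ: "Qf t integrable_on {0..L}" by (rule intg[OF cQ t])
    have s1: "integral {0..L} (Ht t) = integral {0..L} (Px t) + integral {0..L} (\<lambda>x. Ht t x - Px t x)"
      using integral_diff[OF iHt iPx] by simp
    have s2: "integral {0..L} (Px t) = Pf t L - Pf t 0"
      by (rule ftc_real) (use dP t L_pos in auto)
    have i3: "(\<lambda>x. -2 * mu * H t x) integrable_on {0..L}"
      using integrable_on_cmult_left[OF iH, of "-2 * mu"] by simp
    have i4: "(\<lambda>x. mu / K1 * Qf t x) integrable_on {0..L}"
      using integrable_on_cmult_left[OF iQ, of "mu / K1"] by simp
    have s3: "integral {0..L} (\<lambda>x. Ht t x - Px t x) \<le> integral {0..L} (\<lambda>x. -2 * mu * H t x + mu / K1 * Qf t x)"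
      by (rule integral_le) (use key t integrable_diff[OF iHt iPx] integrable_add[OF i3 i4] in auto)
    have s4: "integral {0..L} (\<lambda>x. -2 * mu * H t x + mu / K1 * Qf t x) = -2 * mu * EE + mu / K1 * integral {0..L} (Qf t)"
      unfolding EE_def E1H using integral_add[OF i3 i4] by simp
    have s5: "mu / K1 * integral {0..L} (Qf t) \<le> mu / K1 * (2 * L * (b t \<omega>)^2 + K1 * EE)"
      using Qint[OF t] mu_pos K1_pos unfolding EE_def by (intro mult_left_mono) auto
    have s6: "mu / K1 * (2 * L * (b t \<omega>)^2 + K1 * EE) = 1 / (2 * exp 1 * K1 * k) * (b t \<omega>)^2 + mu * EE"
      unfolding mu_def mu_c_def using K1_pos L_pos k0 by (simp add: field_simps)
    have s7: "Pf t L - Pf t 0 \<le> exp 1 * k^2 * a^2 * (bt t \<omega>)^2" using PL[OF t] P0[OF t] by linarith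
    have s8: "exp 1 * k^2 * a^2 * (bt t \<omega>)^2 + 1 / (2 * exp 1 * K1 * k) * (b t \<omega>)^2 \<le> Cg * hf t"
    proof -
      have c1: "exp 1 * k^2 * a^2 \<le> Cg"
      proof -
        have p: "0 \<le> exp 1 * k^2 * a^2" "0 \<le> 1 / (2 * exp 1 * K1 * k)" using K1_pos k0 by auto
        have "4/3 * exp 1 * a\<^sup>2 * k\<^sup>2 = 4/3 * (exp 1 * k^2 * a^2)" by simp
        thus ?thesis unfolding Cg_def using p by linarith
      qed
      have c2: "1 / (2 * exp 1 * K1 * k) \<le> Cg" unfolding Cg_def by simp
      have "exp 1 * k^2 * a^2 * (bt t \<omega>)^2 \<le> Cg * (bt t \<omega>)^2" using c1 by (intro mult_right_mono) auto
      moreover have "1 / (2 * exp 1 * K1 * k) * (b t \<omega>)^2 \<le> Cg * (b t \<omega>)^2" using c2 by (intro mult_right_mono) auto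
      ultimately show ?thesis unfolding hf_def by (simp add: algebra_simps)
    qed
    show ?thesis using s1 s2 s3 s4 s5 s6 s7 s8 unfolding EE_def by linarith
  qed
  have hc: "continuous_on {0..T} hf" unfolding hf_def
    by (intro continuous_intros b_C2(1) b_C2(2))
  have Cg0: "Cg \<ge> 0" unfolding Cg_def using K1_pos k0 by simp
  have main: "Een a L k Tp ub u ux ut t \<le> exp (- mu * (t - Tp)) *
      (Een a L k Tp ub u ux ut Tp + Cg * C\<nu> / (\<nu> - mu))" if t: "t \<in> {Tp..T}" for t
    unfolding Een_def
    by (rule energy_decay[OF Tp_pos T_gt mu_pos nu_gt[folded mu_def] Cg0 Cnu_pos dE1 hc bnd _ t])
       (use b_decay in \<open>auto simp: hf_def\<close>)
  have claim1: "\<forall>t \<in> {Tp<..<T}. Een a L k Tp ub u ux ut t \<le> exp (- mu * (t - Tp)) *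
      (Een a L k Tp ub u ux ut Tp + Cg * C\<nu> / (\<nu> - mu))"
    using main by auto
  have claim2: "H1sq (T - Tp) T L u ux ut \<le> K1 * exp (- mu * (T - Tp)) *
      (Een a L k Tp ub u ux ut Tp + Cg * C\<nu> / (\<nu> - mu))" if b0: "\<forall>t \<in> {T - Tp..T}. b t \<omega> = 0"
  proof -
    have sub: "{T - Tp..T} \<subseteq> {0..T}" using T_gt by auto
    have "H1sq (T - Tp) T L u ux ut = integral (cbox (T - Tp, 0) (T, L)) (\<lambda>p. Qf (fst p) (snd p))"
      unfolding H1sq_def Qf_def cbox_Pair_eq box_real(2) by (simp add: case_prod_beta')
    also have "\<dots> = integral (cbox (T - Tp) T) (\<lambda>t. integral (cbox 0 L) (\<lambda>x. Qf t x))"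
    proof -
      have "continuous_on (cbox (T - Tp, 0) (T, L)) (\<lambda>p. Qf (fst p) (snd p))"
        by (rule continuous_on_subset[OF cQ]) (use sub in \<open>auto simp: cbox_Pair_eq R_def\<close>)
      from integral_prod_continuous[OF this] show ?thesis by simp
    qed
    also have "\<dots> = integral {T - Tp..T} (\<lambda>t. integral {0..L} (Qf t))" by (simp add: box_real(2))
    also have "\<dots> \<le> integral {T - Tp..T} (\<lambda>t. K1 * E1 a L k ub u ux ut t)"
    proof (rule integral_le)
      have "continuous_on {T - Tp..T} (\<lambda>t. integral (cbox 0 L) (Qf t))"
        by (rule integral_continuous_on_param) (use cQ sub in \<open>auto simp: R_def cbL case_prod_beta'
           intro: continuous_on_subset\<close>)
      thus "(\<lambda>t. integral {0..L} (Qf t)) integrable_on {T - Tp..T}"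
        by (simp add: cbL integrable_continuous_interval)
      have "continuous_on {0..T} (\<lambda>t. E1 a L k ub u ux ut t)" by (rule DERIV_continuous_on[OF dE1])
      thus "(\<lambda>t. K1 * E1 a L k ub u ux ut t) integrable_on {T - Tp..T}"
        by (intro integrable_continuous_interval continuous_intros continuous_on_subset[OF _ sub])
      fix t assume t: "t \<in> {T - Tp..T}"
      show "integral {0..L} (Qf t) \<le> K1 * E1 a L k ub u ux ut t"
        using Qint[of t] t sub b0 by auto
    qed
    also have "\<dots> = K1 * Een a L k Tp ub u ux ut T" unfolding Een_def by simp
    also have "\<dots> \<le> K1 * (exp (- mu * (T - Tp)) * (Een a L k Tp ub u ux ut Tp + Cg * C\<nu> / (\<nu> - mu)))"
      using main[of T] T_gt K1_pos by (intro mult_left_mono) auto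
    finally show ?thesis by (simp add: mult.assoc)
  qed
  show ?thesis using claim1 claim2 unfolding mu_def Cg_def K1_def by simp
qed

end
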